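(* Let $(a_n)_{\mathrm c}=[a_{n\varepsilon}]_{\mathrm c}\in\widetilde{\mathbb C}_{\mathrm c}$, $c=[c_\varepsilon]\in\widetilde{\mathbb C}$, and let $U$ be the interior, in the sharp topology, of $S((a_n)_{\mathrm c},c)$. For $z=[z_\varepsilon]\in U$ set $$f(z):=\sum_{n\in\widetilde{\mathbb N}}a_n(z-c)^n=\Big[\sum_{n=0}^{\infty}a_{n\varepsilon}(z_\varepsilon-c_\varepsilon)^n\Big]=:[v_\varepsilon(z_\varepsilon)].$$ Then $f$ is a generalized holomorphic function on $U$, $f\in\mathcal{GH}(U)$, defined by the net $(v_\varepsilon)$.
   Context: Fix $I=(0,1]$ and a gauge $\rho=(\rho_\varepsilon)_{\varepsilon\in I}$ with $\rho_\varepsilon\in I$ and $\rho_\varepsilon\to0$ as $\varepsilon\to0$. "$\forall^0\varepsilon$" means "for all sufficiently small $\varepsilon\in I$". A net $(x_\varepsilon)\in\mathbb C^I$ is $\rho$-moderate ($(x_\varepsilon)\in\mathbb C_\rho$) if $\exists N\in\mathbb N\,\forall^0\varepsilon:|x_\varepsilon|\le\rho_\varepsilon^{-N}$, and $\rho$-negligible if $\forall q\in\mathbb N\,\forall^0\varepsilon:|x_\varepsilon|\le\rho_\varepsilon^q$. $\widetilde{\mathbb C}:=\mathbb C_\rho/\{\text{negligible nets}\}$ with classes $[x_\varepsilon]$; $\widetilde{\mathbb R}\subseteq\widetilde{\mathbb C}$ consists of classes of real moderate nets; $\mathrm d\rho:=[\rho_\varepsilon]$, $|[z_\varepsilon]|:=[|z_\varepsilon|]$.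 On $\widetilde{\mathbb R}$: $[x_\varepsilon]\le[y_\varepsilon]$ iff $x_\varepsilon\le y_\varepsilon+z_\varepsilon$ $\forall^0\varepsilon$ for some negligible $(z_\varepsilon)$; $x<y$ iff $\exists m\,\forall^0\varepsilon:y_\varepsilon-x_\varepsilon>\rho_\varepsilon^m$; $\widetilde{\mathbb R}_{>0}:=\{x:x>0\}$. The sharp topology on $\widetilde{\mathbb C}$ is generated by $B_r(c):=\{z:|z-c|<r\}$, $r\in\widetilde{\mathbb R}_{>0}$. Hypernatural numbers: $\widetilde{\mathbb N}:=\{[n_\varepsilon]\in\widetilde{\mathbb R}:n_\varepsilon\in\mathbb N\ \forall\varepsilon\}$; for each $N\in\widetilde{\mathbb N}$ a representative $(\mathrm{ni}(N)_\varepsilon)$ with all $\mathrm{ni}(N)_\varepsilon\in\mathbb N$ is fixed. Hyperlimit: $l=\lim_{n\in\widetilde{\mathbb N}}a_n$ means $\forall q\,\exists M\in\widetilde{\mathbb N}\,\forall n\in\widetilde{\mathbb N}:n\ge M\Rightarrow|a_n-l|<\mathrm d\rho^q$. Hyperseries: a net $(a_{n\varepsilon})_{n\in\mathbb N,\varepsilon\in I}$ is moderate over hypersums if for every $N\in\widetilde{\mathbb N}$ the net $(\sum_{n=0}^{\mathrm{ni}(N)_\varepsilon}a_{n\varepsilon})_\varepsilon$ is $\rho$-moderate; two such nets are equivalent if for all $N,M\in\widetilde{\mathbb N}$ the net $(\sum_{n=\mathrm{ni}(N)_\varepsilon}^{\mathrm{ni}(M)_\varepsilon}(a_{n\varepsilon}-\bar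 a_{n\varepsilon}))_\varepsilon$ is negligible; the quotient is $\widetilde{\mathbb C}_{\mathrm s}$ with classes $[b_{n\varepsilon}]_{\mathrm s}$. $\sum_{n=N}^Mb_n:=[\sum_{n=\mathrm{ni}(N)_\varepsilon}^{\mathrm{ni}(M)_\varepsilon}b_{n\varepsilon}]$, and $\sum_{n\in\widetilde{\mathbb N}}b_n:=\lim_{N\in\widetilde{\mathbb N}}\sum_{n=0}^Nb_n$ when this exists. Coefficients: $\widetilde{\mathbb C}_{\mathrm c}$ is the set of weakly $\rho$-moderate nets $(a_{n\varepsilon})$ ($\exists Q,R\in\mathbb N\,\forall^0\varepsilon\,\forall n\in\mathbb N:|a_{n\varepsilon}|\le\rho_\varepsilon^{-nQ-R}$) modulo strong equivalence ($\forall q,r\,\forall^0\varepsilon\,\forall n:|a_{n\varepsilon}-\bar a_{n\varepsilon}|\le\rho_\varepsilon^{nq+r}$), classes $(a_n)_{\mathrm c}=[a_{n\varepsilon}]_{\mathrm c}$. $\widetilde{\mathbb R}_\infty:=(\mathbb R\cup\{\pm\infty\})^I/\sim_\rho$, and for $x\in\widetilde{\mathbb R}$, $y\in\widetilde{\mathbb R}_\infty$, $x<y$ iff $\exists m\,\forall^0\varepsilon:y_\varepsilon>x_\varepsilon+\rho_\varepsilon^m$. Radius: $\mathrm{rad}(a_n)_{\mathrm c}:=[(\limsup_n|a_{n\varepsilon}|^{1/n})^{-1}]\in\widetilde{\mathbb R}_\infty$. Set of convergence: $S((a_n)_{\mathrm c},c)$ is the set of $z\in\widetilde{\mathbb C}$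 with $|z-c|<\mathrm{rad}(a_n)_{\mathrm c}$ for which there exist representatives $z=[z_\varepsilon]$, $c=[c_\varepsilon]$, $(a_n)_{\mathrm c}=[a_{n\varepsilon}]_{\mathrm c}$ such that: (a) the net $(a_{n\varepsilon}(z_\varepsilon-c_\varepsilon)^n)_{n,\varepsilon}$ is moderate over hypersums; (b) $\sum_{n\in\widetilde{\mathbb N}}a_n(z-c)^n$ converges and equals $[\sum_{n=0}^{\infty}a_{n\varepsilon}(z_\varepsilon-c_\varepsilon)^n]$; (c) for every representative $z=[\hat z_\varepsilon]$, the net $(\sum_{n\ge1}na_{n\varepsilon}(\hat z_\varepsilon-c_\varepsilon)^{n-1})_\varepsilon$ is $\rho$-moderate (these conditions hold for any representatives once they hold for some). Generalized holomorphic functions: for $U\subseteq\widetilde{\mathbb C}$ sharply open, $f:U\to\widetilde{\mathbb C}$ is a GHF, $f\in\mathcal{GH}(U)$, if there exist open sets $\Omega_\varepsilon\subseteq\mathbb C$ and holomorphic $f_\varepsilon:\Omega_\varepsilon\to\mathbb C$ such that for every $z\in U$ and every representative $z=[z_\varepsilon]$: $z_\varepsilon\in\Omega_\varepsilon$ $\forall^0\varepsilon$, $f(z)=[f_\varepsilon(z_\varepsilon)]$, and $(f_\varepsilon^{(k)}(z_\varepsilon))\in\mathbb C_\rho$ for all $k\in\mathbb N$; $f$ is then said to be defined by $(f_\varepsilon)$. *)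

theory Defs
  imports "HOL-Complex_Analysis.Complex_Analysis"
begin

(* Nets are functions real => complex; only the values on I = (0,1] near 0 matter.
   "for all sufficiently small eps in I" is  eventually _ (at_right 0).
   Generalized numbers are equivalence classes, represented as sets of nets. *)

type_synonym net = "real \<Rightarrow> complex"
type_synonym gnum = "net set"

definition gauge :: "(real \<Rightarrow> real) \<Rightarrow> bool" where
  "gauge rho \<longleftrightarrow> (\<forall>e\<in>{0<..1}. rho e \<in> {0<..1}) \<and> (rho \<longlongrightarrow> 0) (at_right 0)"

definition moderate :: "(real \<Rightarrow> real) \<Rightarrow> net \<Rightarrow> bool" where
  "moderate rho x \<longleftrightarrow> (\<exists>N::nat. eventually (\<lambda>e. cmod (x e) \<le> inverse (rho e ^ N)) (at_right 0))"

definition negligible :: "(real \<Rightarrow> real) \<Rightarrow> net \<Rightarrow> bool" where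
  "negligible rho x \<longleftrightarrow> (\<forall>q::nat. eventually (\<lambda>e. cmod (x e) \<le> rho e ^ q) (at_right 0))"

definition gclass :: "(real \<Rightarrow> real) \<Rightarrow> net \<Rightarrow> gnum" where
  "gclass rho x = {y. moderate rho y \<and> negligible rho (\<lambda>e. y e - x e)}"

definition Ctil :: "(real \<Rightarrow> real) \<Rightarrow> gnum set" where
  "Ctil rho = {gclass rho x | x. moderate rho x}"

definition real_net :: "net \<Rightarrow> bool" where
  "real_net x \<longleftrightarrow> (\<forall>e. x e \<in> \<real>)"

definition Rtil :: "(real \<Rightarrow> real) \<Rightarrow> gnum set" where
  "Rtil rho = {gclass rho x | x. moderate rho x \<and> real_net x}"

definition rep :: "(real \<Rightarrow> real) \<Rightarrow> gnum \<Rightarrow> net" where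
  "rep rho X = (SOME x. moderate rho x \<and> X = gclass rho x)"

definition gdiff :: "(real \<Rightarrow> real) \<Rightarrow> gnum \<Rightarrow> gnum \<Rightarrow> gnum" where
  "gdiff rho X Y = gclass rho (\<lambda>e. rep rho X e - rep rho Y e)"

definition gabs :: "(real \<Rightarrow> real) \<Rightarrow> gnum \<Rightarrow> gnum" where
  "gabs rho X = gclass rho (\<lambda>e. complex_of_real (cmod (rep rho X e)))"

definition drho_pow :: "(real \<Rightarrow> real) \<Rightarrow> nat \<Rightarrow> gnum" where
  "drho_pow rho q = gclass rho (\<lambda>e. complex_of_real (rho e ^ q))"

definition gle :: "(real \<Rightarrow> real) \<Rightarrow> gnum \<Rightarrow> gnum \<Rightarrow> bool" where
  "gle rho X Y \<longleftrightarrow> (\<exists>x y z. moderate rho x \<and> real_net x \<and> X = gclass rho x \<and>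
      moderate rho y \<and> real_net y \<and> Y = gclass rho y \<and> negligible rho z \<and> real_net z \<and>
      eventually (\<lambda>e. Re (x e) \<le> Re (y e) + Re (z e)) (at_right 0))"

definition glt :: "(real \<Rightarrow> real) \<Rightarrow> gnum \<Rightarrow> gnum \<Rightarrow> bool" where
  "glt rho X Y \<longleftrightarrow> (\<exists>x y. moderate rho x \<and> real_net x \<and> X = gclass rho x \<and>
      moderate rho y \<and> real_net y \<and> Y = gclass rho y \<and>
      (\<exists>m::nat. eventually (\<lambda>e. Re (y e) - Re (x e) > rho e ^ m) (at_right 0)))"

definition sharp_ball :: "(real \<Rightarrow> real) \<Rightarrow> gnum \<Rightarrow> gnum \<Rightarrow> gnum set" where
  "sharp_ball rho c r = {z \<in> Ctil rho. glt rho (gabs rho (gdiff rho z c)) r}"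

definition sharp_topology :: "(real \<Rightarrow> real) \<Rightarrow> gnum topology" where
  "sharp_topology rho = topology_generated_by
     {sharp_ball rho c r | c r. c \<in> Ctil rho \<and> r \<in> Rtil rho \<and> glt rho (gclass rho (\<lambda>e. 0)) r}"

definition Ntil :: "(real \<Rightarrow> real) \<Rightarrow> gnum set" where
  "Ntil rho = {X \<in> Rtil rho. \<exists>n :: real \<Rightarrow> nat. X = gclass rho (\<lambda>e. of_nat (n e))}"

definition ni :: "(real \<Rightarrow> real) \<Rightarrow> gnum \<Rightarrow> real \<Rightarrow> nat" where
  "ni rho N = (SOME n. N = gclass rho (\<lambda>e. of_nat (n e)))"

definition hyperlim :: "(real \<Rightarrow> real) \<Rightarrow> (gnum \<Rightarrow> gnum) \<Rightarrow> gnum \<Rightarrow> bool" where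
  "hyperlim rho a l \<longleftrightarrow> l \<in> Ctil rho \<and>
     (\<forall>q::nat. \<exists>M\<in>Ntil rho. \<forall>n\<in>Ntil rho. gle rho M n \<longrightarrow>
        glt rho (gabs rho (gdiff rho (a n) l)) (drho_pow rho q))"

definition moderate_hypersums :: "(real \<Rightarrow> real) \<Rightarrow> (nat \<Rightarrow> net) \<Rightarrow> bool" where
  "moderate_hypersums rho b \<longleftrightarrow>
     (\<forall>N\<in>Ntil rho. moderate rho (\<lambda>e. \<Sum>n\<le>ni rho N e. b n e))"

definition hypersum :: "(real \<Rightarrow> real) \<Rightarrow> (nat \<Rightarrow> net) \<Rightarrow> gnum \<Rightarrow> gnum \<Rightarrow> gnum" where
  "hypersum rho b N M = gclass rho (\<lambda>e. \<Sum>n\<in>{ni rho N e..ni rho M e}. b n e)"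

definition gzero :: "(real \<Rightarrow> real) \<Rightarrow> gnum" where
  "gzero rho = gclass rho (\<lambda>e. 0)"

definition hyperseries_converges_to :: "(real \<Rightarrow> real) \<Rightarrow> (nat \<Rightarrow> net) \<Rightarrow> gnum \<Rightarrow> bool" where
  "hyperseries_converges_to rho b l \<longleftrightarrow> hyperlim rho (\<lambda>N. hypersum rho b (gzero rho) N) l"

definition hyperseries :: "(real \<Rightarrow> real) \<Rightarrow> (nat \<Rightarrow> net) \<Rightarrow> gnum" where
  "hyperseries rho b = (THE l. hyperseries_converges_to rho b l)"

definition weakly_moderate :: "(real \<Rightarrow> real) \<Rightarrow> (nat \<Rightarrow> net) \<Rightarrow> bool" where
  "weakly_moderate rho a \<longleftrightarrow> (\<exists>Q R::nat. eventually
     (\<lambda>e. \<forall>n. cmod (a n e) \<le> inverse (rho e ^ (n * Q + R))) (at_right 0))"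

definition strongly_equiv :: "(real \<Rightarrow> real) \<Rightarrow> (nat \<Rightarrow> net) \<Rightarrow> (nat \<Rightarrow> net) \<Rightarrow> bool" where
  "strongly_equiv rho a a' \<longleftrightarrow> (\<forall>q r::nat. eventually
     (\<lambda>e. \<forall>n. cmod (a n e - a' n e) \<le> rho e ^ (n * q + r)) (at_right 0))"

definition rad_net :: "(nat \<Rightarrow> net) \<Rightarrow> real \<Rightarrow> ereal" where
  "rad_net a e = inverse (limsup (\<lambda>n. ereal (root n (cmod (a n e)))))"

(* set of convergence S((a_n)_c, c), for representatives a of the coefficient class and c *)
definition conv_set :: "(real \<Rightarrow> real) \<Rightarrow> (nat \<Rightarrow> net) \<Rightarrow> net \<Rightarrow> gnum set" where
  "conv_set rho a c = {z \<in> Ctil rho.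
     (\<exists>z'\<in>z. \<exists>m::nat. eventually
        (\<lambda>e. rad_net a e > ereal (cmod (z' e - c e)) + ereal (rho e ^ m)) (at_right 0)) \<and>
     (\<exists>z'\<in>z. \<exists>c'\<in>gclass rho c. \<exists>a'. weakly_moderate rho a' \<and> strongly_equiv rho a a' \<and>
        moderate_hypersums rho (\<lambda>n e. a' n e * (z' e - c' e) ^ n) \<and>
        hyperseries_converges_to rho (\<lambda>n e. a' n e * (z' e - c' e) ^ n)
          (gclass rho (\<lambda>e. \<Sum>n. a' n e * (z' e - c' e) ^ n)) \<and>
        (\<forall>zh\<in>z. moderate rho (\<lambda>e. \<Sum>n. of_nat (Suc n) * a' (Suc n) e * (zh e - c' e) ^ n)))}"

definition GH_defined_by :: "(real \<Rightarrow> real) \<Rightarrow> gnum set \<Rightarrow> (gnum \<Rightarrow> gnum)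
    \<Rightarrow> (real \<Rightarrow> complex set) \<Rightarrow> (real \<Rightarrow> complex \<Rightarrow> complex) \<Rightarrow> bool" where
  "GH_defined_by rho U f Omega F \<longleftrightarrow>
     openin (sharp_topology rho) U \<and> U \<subseteq> Ctil rho \<and>
     (\<forall>e\<in>{0<..1}. open (Omega e) \<and> F e holomorphic_on Omega e) \<and>
     (\<forall>z\<in>U. \<forall>z'\<in>z. eventually (\<lambda>e. z' e \<in> Omega e) (at_right 0) \<and>
        f z = gclass rho (\<lambda>e. F e (z' e)) \<and>
        (\<forall>k::nat. moderate rho (\<lambda>e. (deriv ^^ k) (F e) (z' e))))"

end

theory Submission
  imports Defs
begin

locale gsetup =
  fixes rho :: "real \<Rightarrow> real"
  assumes gauge: "gauge rho"
begin

lemma ev_pos: "eventually (\<lambda>e. 0 < rho e \<and> rho e \<le> 1) (at_right 0)"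
proof -
  have "eventually (\<lambda>e. e \<in> {0<..1::real}) (at_right 0)"
    unfolding eventually_at_right_field by (intro exI[of _ 1]) auto
  then show ?thesis using gauge unfolding gauge_def by (auto elim: eventually_mono)
qed

lemma ev_small: "(d::real) > 0 \<Longrightarrow> eventually (\<lambda>e. rho e < d) (at_right 0)"
  using gauge unfolding gauge_def by (auto dest: order_tendstoD(2))

lemma ev_basic: "eventually (\<lambda>e. 0 < rho e \<and> rho e \<le> 1/4) (at_right 0)"
  using ev_pos ev_small[of "1/4"] by (auto elim: eventually_elim2)

lemma neg_I:
  assumes "\<And>q. eventually (\<lambda>e. cmod (x e) \<le> C * rho e ^ q) (at_right 0)"
  shows "negligible rho x"
  unfolding negligible_def
proof
  fix q :: nat
  obtain k :: nat where k: "C \<le> 2 ^ k" 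
    by (meson real_arch_pow less_imp_le one_less_numeral_iff semiring_norm(76))
  show "eventually (\<lambda>e. cmod (x e) \<le> rho e ^ q) (at_right 0)"
    using assms[of "q+k"] ev_basic
  proof eventually_elim
    case (elim e)
    have "rho e ^ k \<le> (1/2) ^ k" using elim by (intro power_mono) auto
    then have "C * rho e ^ k \<le> 2^k * (1/2)^k"
      using k elim by (smt (verit) mult_mono zero_le_power)
    then have "C * rho e ^ k \<le> 1" by (simp add: power_mult_distrib[symmetric])
    then have "C * rho e ^ (q+k) \<le> rho e ^ q" using elim
      by (simp add: power_add)
    then show ?case using elim by linarith
  qed
qed

lemma negD: "negligible rho x \<Longrightarrow> eventually (\<lambda>e. cmod (x e) \<le> rho e ^ q) (at_right 0)"
  unfolding negligible_def by auto

lemma modD: "moderate rho x \<Longrightarrow> \<exists>N. eventually (\<lambda>e. cmod (x e) \<le> inverse (rho e ^ N)) (at_right 0)"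
  unfolding moderate_def by auto

lemma mod_I:
  assumes "eventually (\<lambda>e. cmod (x e) \<le> C * inverse (rho e ^ N)) (at_right 0)"
  shows "moderate rho x"
proof -
  obtain k :: nat where k: "C \<le> 2 ^ k" 
    by (meson real_arch_pow less_imp_le one_less_numeral_iff semiring_norm(76))
  have "eventually (\<lambda>e. cmod (x e) \<le> inverse (rho e ^ (N+k))) (at_right 0)"
    using assms ev_basic
  proof eventually_elim
    case (elim e)
    have "rho e ^ k \<le> (1/2) ^ k" using elim by (intro power_mono) auto
    then have "C * rho e ^ k \<le> 2^k * (1/2)^k"
      using k elim by (smt (verit) mult_mono zero_le_power)
    then have "C * rho e ^ k \<le> 1" by (simp add: power_mult_distrib[symmetric])
    then have "C * inverse (rho e ^ N) \<le> inverse (rho e ^ (N+k))" using elim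
      by (simp add: power_add field_simps)
    then show ?case using elim by linarith
  qed
  then show ?thesis unfolding moderate_def by blast
qed

lemma neg_le:
  assumes "negligible rho y" "eventually (\<lambda>e. cmod (x e) \<le> C * cmod (y e)) (at_right 0)"
  shows "negligible rho x"
proof (rule neg_I[where C="max C 0"])
  fix q show "eventually (\<lambda>e. cmod (x e) \<le> max C 0 * rho e ^ q) (at_right 0)"
    using negD[OF assms(1), of q] assms(2)
  proof eventually_elim
    case (elim e)
    have "C * cmod (y e) \<le> max C 0 * cmod (y e)" by (simp add: mult_right_mono)
    also have "\<dots> \<le> max C 0 * rho e ^ q" using elim by (simp add: mult_left_mono)
    finally show ?case using elim by linarith
  qed
qed

lemma neg_zero: "negligible rho (\<lambda>e. 0)"
  by (rule neg_I[of _ 0]) auto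

lemma neg_add:
  assumes "negligible rho x" "negligible rho y"
  shows "negligible rho (\<lambda>e. x e + y e)"
proof (rule neg_I[of _ 2])
  fix q show "eventually (\<lambda>e. cmod (x e + y e) \<le> 2 * rho e ^ q) (at_right 0)"
    using negD[OF assms(1), of q] negD[OF assms(2), of q]
    by eventually_elim (smt (verit) norm_triangle_ineq)
qed

lemma neg_uminus: "negligible rho x \<Longrightarrow> negligible rho (\<lambda>e. - x e)"
  unfolding negligible_def by simp

lemma neg_diff:
  assumes "negligible rho x" "negligible rho y"
  shows "negligible rho (\<lambda>e. x e - y e)"
  using neg_add[OF assms(1) neg_uminus[OF assms(2)]] by simp

lemma neg_mult:
  assumes "moderate rho x" "negligible rho y"
  shows "negligible rho (\<lambda>e. x e * y e)"
proof -
  obtain N where N: "eventually (\<lambda>e. cmod (x e) \<le> inverse (rho e ^ N)) (at_right 0)"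
    using modD[OF assms(1)] by blast
  show ?thesis
  proof (rule neg_I[of _ 1])
    fix q show "eventually (\<lambda>e. cmod (x e * y e) \<le> 1 * rho e ^ q) (at_right 0)"
      using N negD[OF assms(2), of "q+N"] ev_basic
    proof eventually_elim
      case (elim e)
      have "cmod (x e * y e) \<le> inverse (rho e ^ N) * rho e ^ (q+N)"
        using elim by (simp add: norm_mult mult_mono)
      also have "\<dots> = rho e ^ q" using elim by (simp add: power_add)
      finally show ?case by simp
    qed
  qed
qed

lemma neg_mod: "negligible rho x \<Longrightarrow> moderate rho x"
  unfolding moderate_def using negD[of x 0] by (intro exI[of _ 0]) simp

lemma mod_le:
  assumes "moderate rho y" "eventually (\<lambda>e. cmod (x e) \<le> C * cmod (y e)) (at_right 0)"
  shows "moderate rho x"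
proof -
  obtain N where N: "eventually (\<lambda>e. cmod (y e) \<le> inverse (rho e ^ N)) (at_right 0)"
    using modD[OF assms(1)] by blast
  show ?thesis
  proof (rule mod_I[where C="max C 0" and N=N])
    show "eventually (\<lambda>e. cmod (x e) \<le> max C 0 * inverse (rho e ^ N)) (at_right 0)"
      using N assms(2)
    proof eventually_elim
      case (elim e)
      have "C * cmod (y e) \<le> max C 0 * cmod (y e)" by (simp add: mult_right_mono)
      also have "\<dots> \<le> max C 0 * inverse (rho e ^ N)" using elim by (simp add: mult_left_mono)
      finally show ?case using elim by linarith
    qed
  qed
qed

lemma mod_add:
  assumes "moderate rho x" "moderate rho y"
  shows "moderate rho (\<lambda>e. x e + y e)"
proof -
  obtain N where N: "eventually (\<lambda>e. cmod (x e) \<le> inverse (rho e ^ N)) (at_right 0)"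
    using modD[OF assms(1)] by blast
  obtain M where M: "eventually (\<lambda>e. cmod (y e) \<le> inverse (rho e ^ M)) (at_right 0)"
    using modD[OF assms(2)] by blast
  show ?thesis
  proof (rule mod_I[where C=2 and N="N+M"])
    show "eventually (\<lambda>e. cmod (x e + y e) \<le> 2 * inverse (rho e ^ (N+M))) (at_right 0)"
      using N M ev_basic
    proof eventually_elim
      case (elim e)
      have "rho e ^ M \<le> 1" "rho e ^ N \<le> 1" using elim by (auto intro: power_le_one)
      then have "inverse (rho e ^ N) \<le> inverse (rho e ^ (N+M))" "inverse (rho e ^ M) \<le> inverse (rho e ^ (N+M))"
        using elim by (auto simp: power_add field_simps)
      then show ?case using elim norm_triangle_ineq[of "x e" "y e"] by linarith
    qed
  qed
qed

lemma mod_mult: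
  assumes "moderate rho x" "moderate rho y"
  shows "moderate rho (\<lambda>e. x e * y e)"
proof -
  obtain N where N: "eventually (\<lambda>e. cmod (x e) \<le> inverse (rho e ^ N)) (at_right 0)"
    using modD[OF assms(1)] by blast
  obtain M where M: "eventually (\<lambda>e. cmod (y e) \<le> inverse (rho e ^ M)) (at_right 0)"
    using modD[OF assms(2)] by blast
  have "eventually (\<lambda>e. cmod (x e * y e) \<le> inverse (rho e ^ (N+M))) (at_right 0)"
    using N M ev_basic
  proof eventually_elim
    case (elim e)
    have "cmod (x e * y e) \<le> inverse (rho e ^ N) * inverse (rho e ^ M)"
      using elim by (simp add: norm_mult mult_mono)
    then show ?case by (simp add: power_add)
  qed
  then show ?thesis unfolding moderate_def by blast
qed

lemma mod_const: "moderate rho (\<lambda>e. C)"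
  by (rule mod_I[where C="cmod C" and N=0]) auto

lemma mod_uminus: "moderate rho x \<Longrightarrow> moderate rho (\<lambda>e. - x e)"
  unfolding moderate_def by simp

lemma mod_diff: "moderate rho x \<Longrightarrow> moderate rho y \<Longrightarrow> moderate rho (\<lambda>e. x e - y e)"
  using mod_add[of x "\<lambda>e. - y e"] mod_uminus[of y] by simp

lemma gclass_eq: "negligible rho (\<lambda>e. x e - y e) \<Longrightarrow> gclass rho x = gclass rho y"
  unfolding gclass_def
proof (intro Collect_cong conj_cong refl iffI)
  fix z assume "negligible rho (\<lambda>e. x e - y e)" "negligible rho (\<lambda>e. z e - x e)"
  then show "negligible rho (\<lambda>e. z e - y e)" using neg_add by fastforce
next
  fix z assume "negligible rho (\<lambda>e. x e - y e)" "negligible rho (\<lambda>e. z e - y e)"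
  then show "negligible rho (\<lambda>e. z e - x e)" using neg_diff by fastforce
qed

lemma gclass_mem: "moderate rho x \<Longrightarrow> x \<in> gclass rho x"
  unfolding gclass_def by (simp add: neg_zero)

lemma gclass_memD: "y \<in> gclass rho x \<Longrightarrow> moderate rho y \<and> negligible rho (\<lambda>e. y e - x e)"
  unfolding gclass_def by simp

lemma gclass_memD2: "y \<in> gclass rho x \<Longrightarrow> moderate rho x"
proof -
  assume "y \<in> gclass rho x"
  then have "moderate rho y" "negligible rho (\<lambda>e. y e - x e)" using gclass_memD by auto
  then have "moderate rho (\<lambda>e. y e - (y e - x e))" using mod_diff neg_mod by blast
  then show ?thesis by simp
qed

lemma gclass_mem_eq: "y \<in> gclass rho x \<Longrightarrow> gclass rho y = gclass rho x"
  using gclass_eq gclass_memD by blast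

lemma gclass_eqD: "gclass rho x = gclass rho y \<Longrightarrow> moderate rho x \<Longrightarrow> negligible rho (\<lambda>e. x e - y e)"
  using gclass_mem[of x] gclass_memD by auto

lemma Ctil_rep:
  assumes "X \<in> Ctil rho"
  shows "moderate rho (rep rho X) \<and> X = gclass rho (rep rho X)"
proof -
  have "\<exists>x. moderate rho x \<and> X = gclass rho x" using assms unfolding Ctil_def by auto
  then show ?thesis unfolding rep_def by (rule someI_ex)
qed

lemma Ctil_mem: "X \<in> Ctil rho \<Longrightarrow> x \<in> X \<Longrightarrow> X = gclass rho x"
  unfolding Ctil_def using gclass_mem_eq by blast

lemma Ctil_memD: "X \<in> Ctil rho \<Longrightarrow> x \<in> X \<Longrightarrow> moderate rho x"
  unfolding Ctil_def using gclass_memD by blast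

lemma Ctil_I: "moderate rho x \<Longrightarrow> gclass rho x \<in> Ctil rho"
  unfolding Ctil_def by blast

lemma rep_mem: "X \<in> Ctil rho \<Longrightarrow> rep rho X \<in> X"
  using Ctil_rep gclass_mem by metis

lemma gclass_Ctil_moderate: "gclass rho x \<in> Ctil rho \<Longrightarrow> moderate rho x"
proof -
  assume "gclass rho x \<in> Ctil rho"
  then obtain y where y: "moderate rho y" "gclass rho x = gclass rho y" unfolding Ctil_def by auto
  then have "y \<in> gclass rho x" using gclass_mem by simp
  then show ?thesis using gclass_memD2 by blast
qed

end

context gsetup
begin

lemma gabs_gdiff:
  assumes "moderate rho x" "moderate rho y"
  shows "gabs rho (gdiff rho (gclass rho x) (gclass rho y)) = gclass rho (\<lambda>e. complex_of_real (cmod (x e - y e)))"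
proof -
  have X: "gclass rho x \<in> Ctil rho" "gclass rho y \<in> Ctil rho" using assms Ctil_I by auto
  define x0 where "x0 = rep rho (gclass rho x)"
  define y0 where "y0 = rep rho (gclass rho y)"
  have x0: "moderate rho x0" "negligible rho (\<lambda>e. x0 e - x e)"
    using rep_mem[OF X(1)] gclass_memD unfolding x0_def by auto
  have y0: "moderate rho y0" "negligible rho (\<lambda>e. y0 e - y e)"
    using rep_mem[OF X(2)] gclass_memD unfolding y0_def by auto
  define D where "D = gclass rho (\<lambda>e. x0 e - y0 e)"
  have D: "D \<in> Ctil rho" unfolding D_def using Ctil_I mod_diff[OF x0(1) y0(1)] by auto
  define d0 where "d0 = rep rho D"
  have d0: "negligible rho (\<lambda>e. d0 e - (x0 e - y0 e))"
    using rep_mem[OF D] gclass_memD unfolding d0_def D_def by auto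
  have n1: "negligible rho (\<lambda>e. (d0 e - (x0 e - y0 e)) + (x0 e - x e) - (y0 e - y e))"
    using neg_add[OF d0 x0(2)] neg_diff[OF _ y0(2)] by blast
  have n2: "negligible rho (\<lambda>e. complex_of_real (cmod (d0 e)) - complex_of_real (cmod (x e - y e)))"
  proof (rule neg_le[OF n1, of _ 1])
    show "\<forall>\<^sub>F e in at_right 0. cmod (complex_of_real (cmod (d0 e)) - complex_of_real (cmod (x e - y e)))
         \<le> 1 * cmod (d0 e - (x0 e - y0 e) + (x0 e - x e) - (y0 e - y e))"
    proof (intro always_eventually allI)
      fix e
      have "cmod (complex_of_real (cmod (d0 e)) - complex_of_real (cmod (x e - y e)))
          = \<bar>cmod (d0 e) - cmod (x e - y e)\<bar>" by (metis norm_of_real of_real_diff)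
      also have "\<dots> \<le> cmod (d0 e - (x e - y e))" by (rule norm_triangle_ineq3)
      finally show "cmod (complex_of_real (cmod (d0 e)) - complex_of_real (cmod (x e - y e)))
         \<le> 1 * cmod (d0 e - (x0 e - y0 e) + (x0 e - x e) - (y0 e - y e))" by (simp add: algebra_simps)
    qed
  qed
  have "gabs rho (gdiff rho (gclass rho x) (gclass rho y)) = gclass rho (\<lambda>e. complex_of_real (cmod (d0 e)))"
    unfolding gabs_def gdiff_def d0_def D_def x0_def y0_def by simp
  also have "\<dots> = gclass rho (\<lambda>e. complex_of_real (cmod (x e - y e)))"
    by (rule gclass_eq[OF n2])
  finally show ?thesis .
qed

lemma glt_I:
  assumes "moderate rho x" "real_net x" "moderate rho y" "real_net y"
    "eventually (\<lambda>e. Re (y e) - Re (x e) > rho e ^ m) (at_right 0)"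
  shows "glt rho (gclass rho x) (gclass rho y)"
  unfolding glt_def using assms by (intro exI[of _ x] exI[of _ y]) auto

lemma glt_E:
  assumes "glt rho X Y" "x \<in> X" "y \<in> Y"
  shows "\<exists>m. eventually (\<lambda>e. Re (y e) - Re (x e) > rho e ^ m) (at_right 0)"
proof -
  obtain x1 y1 m where 1: "X = gclass rho x1" "Y = gclass rho y1"
    "eventually (\<lambda>e. Re (y1 e) - Re (x1 e) > rho e ^ m) (at_right 0)"
    using assms(1) unfolding glt_def by blast
  have nx: "negligible rho (\<lambda>e. x e - x1 e)" "negligible rho (\<lambda>e. y e - y1 e)"
    using assms(2,3) 1 gclass_memD by auto
  have "eventually (\<lambda>e. Re (y e) - Re (x e) > rho e ^ (m+1)) (at_right 0)"
    using 1(3) negD[OF nx(1), of "m+2"] negD[OF nx(2), of "m+2"] ev_basic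
  proof eventually_elim
    case (elim e)
    have a: "\<bar>Re (x e) - Re (x1 e)\<bar> \<le> rho e ^ (m+2)" "\<bar>Re (y e) - Re (y1 e)\<bar> \<le> rho e ^ (m+2)"
      using elim abs_Re_le_cmod[of "x e - x1 e"] abs_Re_le_cmod[of "y e - y1 e"] by auto
    have "rho e ^ (m+2) = rho e ^ m * (rho e * rho e)" by (simp add: power_add power2_eq_square)
    moreover have "rho e ^ (m+1) = rho e ^ m * rho e" by simp
    have "rho e * rho e \<le> rho e / 4" using elim by (simp add: mult_left_mono)
    then have "2 * (rho e * rho e) + rho e < 1" using elim by linarith
    then have "rho e ^ m * (2 * (rho e * rho e) + rho e) < rho e ^ m * 1"
      using elim by (intro mult_strict_left_mono) auto
    then have "2 * rho e ^ (m+2) + rho e ^ (m+1) < rho e ^ m"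
      by (simp add: power_add power2_eq_square algebra_simps)
    then show ?case using a elim by linarith
  qed
  then show ?thesis by blast
qed

lemma real_net_of_real: "real_net (\<lambda>e. complex_of_real (f e))"
  unfolding real_net_def by simp

lemma mod_of_real_cmod: "moderate rho x \<Longrightarrow> moderate rho (\<lambda>e. complex_of_real (cmod (x e)))"
  by (rule mod_le[of x _ 1]) auto

lemma mod_rho_pow: "moderate rho (\<lambda>e. complex_of_real (rho e ^ p))"
proof (rule mod_I[of _ 1 0])
  show "\<forall>\<^sub>F e in at_right 0. cmod (complex_of_real (rho e ^ p)) \<le> 1 * inverse (rho e ^ 0)"
    using ev_pos by eventually_elim (simp add: norm_power power_le_one)
qed

lemma drho_Rtil: "drho_pow rho p \<in> Rtil rho"
  unfolding drho_pow_def Rtil_def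
  by (rule CollectI, rule exI[of _ "\<lambda>e. complex_of_real (rho e ^ p)"]) (intro conjI refl mod_rho_pow real_net_of_real)

lemma drho_pos: "glt rho (gclass rho (\<lambda>e. 0)) (drho_pow rho p)"
  unfolding drho_pow_def
proof (rule glt_I[where m="p+1"])
  show "\<forall>\<^sub>F e in at_right 0. rho e ^ (p+1) < Re (complex_of_real (rho e ^ p)) - Re 0"
    using ev_basic by eventually_elim (simp add: power_strict_decreasing)
qed (auto simp del: of_real_power simp: mod_rho_pow mod_const real_net_def)

lemma sharp_ball_drho_iff:
  assumes "z \<in> Ctil rho" "z' \<in> z" "w \<in> Ctil rho" "w' \<in> w"
  shows "w \<in> sharp_ball rho z (drho_pow rho p) \<longleftrightarrow>
     (\<exists>m. eventually (\<lambda>e. rho e ^ p - cmod (w' e - z' e) > rho e ^ m) (at_right 0))"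
proof -
  have mz: "moderate rho z'" "moderate rho w'" using assms Ctil_memD by auto
  have eq: "z = gclass rho z'" "w = gclass rho w'" using assms Ctil_mem by auto
  have ga: "gabs rho (gdiff rho w z) = gclass rho (\<lambda>e. complex_of_real (cmod (w' e - z' e)))"
    using gabs_gdiff[OF mz(2) mz(1)] eq by simp
  show ?thesis
  proof
    assume "w \<in> sharp_ball rho z (drho_pow rho p)"
    then have "glt rho (gabs rho (gdiff rho w z)) (drho_pow rho p)" unfolding sharp_ball_def by auto
    then have "glt rho (gclass rho (\<lambda>e. complex_of_real (cmod (w' e - z' e)))) (gclass rho (\<lambda>e. complex_of_real (rho e ^ p)))"
      using ga unfolding drho_pow_def by simp
    from glt_E[OF this gclass_mem[OF mod_of_real_cmod[OF mod_diff[OF mz(2) mz(1)]]] gclass_mem[OF mod_rho_pow]]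
    show "\<exists>m. eventually (\<lambda>e. rho e ^ p - cmod (w' e - z' e) > rho e ^ m) (at_right 0)"
      by simp
  next
    assume "\<exists>m. eventually (\<lambda>e. rho e ^ p - cmod (w' e - z' e) > rho e ^ m) (at_right 0)"
    then obtain m where "eventually (\<lambda>e. rho e ^ p - cmod (w' e - z' e) > rho e ^ m) (at_right 0)" by blast
    then have "glt rho (gclass rho (\<lambda>e. complex_of_real (cmod (w' e - z' e)))) (drho_pow rho p)"
      unfolding drho_pow_def
      by (intro glt_I[where m=m]) (auto simp del: of_real_power simp: real_net_of_real mod_rho_pow mod_of_real_cmod mod_diff mz)
    then show "w \<in> sharp_ball rho z (drho_pow rho p)" unfolding sharp_ball_def using ga assms by auto
  qed
qed

end

context gsetup
begin

lemma rho_lemma1: "0 < r \<Longrightarrow> r \<le> 1/4 \<Longrightarrow> r ^ (m+1) + r ^ (m+2) < (r::real) ^ m"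
proof -
  assume r: "0 < r" "r \<le> 1/4"
  have "r * r \<le> r / 4" using r by (simp add: mult_left_mono)
  then have "r + r * r < 1" using r by linarith
  then have "r ^ m * (r + r * r) < r ^ m * 1" using r by (intro mult_strict_left_mono) auto
  then show ?thesis by (simp add: power_add power2_eq_square algebra_simps)
qed

lemma sharp_ball_Ctil: "sharp_ball rho z r \<subseteq> Ctil rho"
  unfolding sharp_ball_def by auto

lemma ball_mono:
  assumes "z \<in> Ctil rho" "p \<le> p'"
  shows "sharp_ball rho z (drho_pow rho p') \<subseteq> sharp_ball rho z (drho_pow rho p)"
proof
  fix w assume w: "w \<in> sharp_ball rho z (drho_pow rho p')"
  have wC: "w \<in> Ctil rho" using w sharp_ball_Ctil by auto
  note iff = sharp_ball_drho_iff[OF assms(1) rep_mem[OF assms(1)] wC rep_mem[OF wC]]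
  obtain m where m: "eventually (\<lambda>e. rho e ^ p' - cmod (rep rho w e - rep rho z e) > rho e ^ m) (at_right 0)"
    using w iff by blast
  have "eventually (\<lambda>e. rho e ^ p - cmod (rep rho w e - rep rho z e) > rho e ^ m) (at_right 0)"
    using m ev_pos
  proof eventually_elim
    case (elim e)
    have "rho e ^ p' \<le> rho e ^ p" using elim assms(2) by (intro power_decreasing) auto
    then show ?case using elim by linarith
  qed
  then show "w \<in> sharp_ball rho z (drho_pow rho p)" using iff by blast
qed

lemma ball_sub:
  assumes c: "c \<in> Ctil rho" and r: "r \<in> Rtil rho" and z: "z \<in> sharp_ball rho c r"
  shows "\<exists>p. sharp_ball rho z (drho_pow rho p) \<subseteq> sharp_ball rho c r"
proof -
  have zC: "z \<in> Ctil rho" using z sharp_ball_Ctil by auto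
  define z0 where "z0 = rep rho z"
  define c0 where "c0 = rep rho c"
  have z0: "moderate rho z0" "z = gclass rho z0" using Ctil_rep[OF zC] z0_def by auto
  have c0: "moderate rho c0" "c = gclass rho c0" using Ctil_rep[OF c] c0_def by auto
  obtain r1 where r1: "moderate rho r1" "real_net r1" "r = gclass rho r1" using r unfolding Rtil_def by auto
  have "glt rho (gabs rho (gdiff rho z c)) r" using z unfolding sharp_ball_def by auto
  then have "glt rho (gclass rho (\<lambda>e. complex_of_real (cmod (z0 e - c0 e)))) (gclass rho r1)"
    using gabs_gdiff[OF z0(1) c0(1)] z0 c0 r1 by simp
  from glt_E[OF this gclass_mem[OF mod_of_real_cmod[OF mod_diff[OF z0(1) c0(1)]]] gclass_mem[OF r1(1)]]
  obtain m where m: "eventually (\<lambda>e. Re (r1 e) - cmod (z0 e - c0 e) > rho e ^ m) (at_right 0)"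
    by auto
  have "sharp_ball rho z (drho_pow rho (m+1)) \<subseteq> sharp_ball rho c r"
  proof
    fix w assume w: "w \<in> sharp_ball rho z (drho_pow rho (m+1))"
    have wC: "w \<in> Ctil rho" using w sharp_ball_Ctil by auto
    define w0 where "w0 = rep rho w"
    have w0: "moderate rho w0" "w = gclass rho w0" using Ctil_rep[OF wC] w0_def by auto
    obtain m' where m': "eventually (\<lambda>e. rho e ^ (m+1) - cmod (w0 e - z0 e) > rho e ^ m') (at_right 0)"
      using w sharp_ball_drho_iff[OF zC rep_mem[OF zC] wC rep_mem[OF wC]] unfolding w0_def z0_def by blast
    have ev: "eventually (\<lambda>e. Re (r1 e) - cmod (w0 e - c0 e) > rho e ^ (m+2)) (at_right 0)"
      using m m' ev_basic
    proof eventually_elim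
      case (elim e)
      have "cmod (w0 e - c0 e) \<le> cmod (w0 e - z0 e) + cmod (z0 e - c0 e)"
        using norm_triangle_ineq[of "w0 e - z0 e" "z0 e - c0 e"] by simp
      moreover have "rho e ^ m' > 0" using elim by simp
      moreover have "rho e ^ (m+1) + rho e ^ (m+2) < rho e ^ m" using elim rho_lemma1 by auto
      ultimately show ?case using elim by linarith
    qed
    have "glt rho (gclass rho (\<lambda>e. complex_of_real (cmod (w0 e - c0 e)))) (gclass rho r1)"
      by (rule glt_I[where m="m+2", OF mod_of_real_cmod[OF mod_diff[OF w0(1) c0(1)]] real_net_of_real r1(1,2)])
         (use ev in simp)
    then have "glt rho (gabs rho (gdiff rho w c)) r"
      using gabs_gdiff[OF w0(1) c0(1)] w0 c0 r1 by simp
    then show "w \<in> sharp_ball rho c r" unfolding sharp_ball_def using wC by simp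
  qed
  then show ?thesis by blast
qed

lemma open_ball_aux:
  assumes "generate_topology_on
     {sharp_ball rho c r | c r. c \<in> Ctil rho \<and> r \<in> Rtil rho \<and> glt rho (gclass rho (\<lambda>e. 0)) r} W"
  shows "\<forall>z\<in>W. z \<in> Ctil rho \<longrightarrow> (\<exists>p. sharp_ball rho z (drho_pow rho p) \<subseteq> W)"
  using assms
proof induction
  case Empty
  then show ?case by simp
next
  case (Int a b)
  show ?case
  proof (intro ballI impI)
    fix z assume z: "z \<in> a \<inter> b" "z \<in> Ctil rho"
    obtain p1 where p1: "sharp_ball rho z (drho_pow rho p1) \<subseteq> a" using Int z by blast
    obtain p2 where p2: "sharp_ball rho z (drho_pow rho p2) \<subseteq> b" using Int z by blast
    have "sharp_ball rho z (drho_pow rho (max p1 p2)) \<subseteq> a \<inter> b"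
      using ball_mono[OF z(2), of p1 "max p1 p2"] ball_mono[OF z(2), of p2 "max p1 p2"] p1 p2 by auto
    then show "\<exists>p. sharp_ball rho z (drho_pow rho p) \<subseteq> a \<inter> b" by blast
  qed
next
  case (UN K)
  show ?case
  proof (intro ballI impI)
    fix z assume z: "z \<in> \<Union>K" "z \<in> Ctil rho"
    then obtain k where k: "k \<in> K" "z \<in> k" by auto
    then obtain p where "sharp_ball rho z (drho_pow rho p) \<subseteq> k" using UN z by blast
    then show "\<exists>p. sharp_ball rho z (drho_pow rho p) \<subseteq> \<Union>K" using k by blast
  qed
next
  case (Basis s)
  then obtain c r where s: "s = sharp_ball rho c r" "c \<in> Ctil rho" "r \<in> Rtil rho" by blast
  show ?case using ball_sub[OF s(2,3)] s(1) by blast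
qed

lemma interior_ball:
  assumes "z \<in> (sharp_topology rho) interior_of S" "z \<in> Ctil rho"
  shows "\<exists>p. sharp_ball rho z (drho_pow rho p) \<subseteq> S"
proof -
  obtain W where W: "openin (sharp_topology rho) W" "z \<in> W" "W \<subseteq> S"
    using assms(1) unfolding interior_of_def by blast
  have "generate_topology_on
     {sharp_ball rho c r | c r. c \<in> Ctil rho \<and> r \<in> Rtil rho \<and> glt rho (gclass rho (\<lambda>e. 0)) r} W"
    using W(1) unfolding sharp_topology_def by (rule openin_topology_generated_by)
  from open_ball_aux[OF this] W assms(2) show ?thesis by blast
qed

lemma Ntil_ni:
  assumes "N \<in> Ntil rho"
  shows "N = gclass rho (\<lambda>e. of_nat (ni rho N e)) \<and> moderate rho (\<lambda>e. of_nat (ni rho N e))"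
proof -
  have ex: "\<exists>n. N = gclass rho (\<lambda>e. of_nat (n e))" using assms unfolding Ntil_def by auto
  have eq: "N = gclass rho (\<lambda>e. of_nat (ni rho N e))"
    unfolding ni_def by (rule someI_ex[OF ex])
  obtain x where x: "moderate rho x" "N = gclass rho x" using assms unfolding Ntil_def Rtil_def by auto
  have "x \<in> gclass rho (\<lambda>e. of_nat (ni rho N e))" using gclass_mem[OF x(1)] x(2) eq by simp
  then show ?thesis using eq gclass_memD2 by blast
qed

lemma nat_net_eq:
  assumes "negligible rho (\<lambda>e. (of_nat (n e) :: complex) - of_nat (m e))"
  shows "eventually (\<lambda>e. n e = m e) (at_right 0)"
  using negD[OF assms, of 1] ev_basic
proof eventually_elim
  case (elim e)
  have "(of_nat (n e)::complex) - of_nat (m e) = of_real (real (n e) - real (m e))" by simp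
  then have "cmod ((of_nat (n e)::complex) - of_nat (m e)) = \<bar>real (n e) - real (m e)\<bar>"
    by (simp only: norm_of_real)
  then have "\<bar>real (n e) - real (m e)\<bar> < 1" using elim by simp
  then show ?case by linarith
qed

lemma ni_ev:
  assumes "N \<in> Ntil rho" "N = gclass rho (\<lambda>e. of_nat (n e))"
  shows "eventually (\<lambda>e. ni rho N e = n e) (at_right 0)"
proof -
  have "negligible rho (\<lambda>e. (of_nat (ni rho N e) :: complex) - of_nat (n e))"
  proof -
    have e1: "N = gclass rho (\<lambda>e. of_nat (ni rho N e))" "moderate rho (\<lambda>e. of_nat (ni rho N e))"
      using Ntil_ni[OF assms(1)] by auto
    from e1(1)[symmetric] assms(2) have "gclass rho (\<lambda>e. of_nat (ni rho N e)) = gclass rho (\<lambda>e. of_nat (n e))"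
      by (rule trans)
    from gclass_eqD[OF this e1(2)] show ?thesis .
  qed
  then show ?thesis by (rule nat_net_eq)
qed

lemma Ntil_I:
  assumes "moderate rho (\<lambda>e. of_nat (n e))"
  shows "gclass rho (\<lambda>e. of_nat (n e)) \<in> Ntil rho"
proof -
  have "gclass rho (\<lambda>e. of_nat (n e)) \<in> Rtil rho"
    unfolding Rtil_def
    by (rule CollectI, rule exI[of _ "\<lambda>e. of_nat (n e)"]) (simp add: assms real_net_def)
  then show ?thesis unfolding Ntil_def by auto
qed

lemma gle_I:
  assumes "moderate rho (\<lambda>e. of_nat (n e))" "moderate rho (\<lambda>e. of_nat (m e))"
    "eventually (\<lambda>e. n e \<le> m e) (at_right 0)"
  shows "gle rho (gclass rho (\<lambda>e. of_nat (n e))) (gclass rho (\<lambda>e. of_nat (m e)))"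
  unfolding gle_def
  apply (rule exI[of _ "\<lambda>e. of_nat (n e)"], rule exI[of _ "\<lambda>e. of_nat (m e)"], rule exI[of _ "\<lambda>e. 0"])
  using assms by (auto simp: real_net_def neg_zero elim: eventually_mono)

lemma gzero_Ntil: "gzero rho \<in> Ntil rho" and gzero_ni: "eventually (\<lambda>e. ni rho (gzero rho) e = 0) (at_right 0)"
proof -
  have eq: "gzero rho = gclass rho (\<lambda>e. of_nat ((\<lambda>e. 0::nat) e))" unfolding gzero_def by simp
  show "gzero rho \<in> Ntil rho" using Ntil_I[of "\<lambda>e. 0"] eq mod_const by simp
  from ni_ev[OF this eq] show "eventually (\<lambda>e. ni rho (gzero rho) e = 0) (at_right 0)"
    by simp
qed

lemma max_moderate:
  assumes "moderate rho (\<lambda>e. of_nat (n e))" "moderate rho (\<lambda>e. of_nat (m e))"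
  shows "moderate rho (\<lambda>e. of_nat (max (n e) (m e)))"
proof (rule mod_le[OF mod_add[OF assms], of _ 1])
  show "\<forall>\<^sub>F e in at_right 0. cmod (of_nat (max (n e) (m e)) :: complex) \<le> 1 * cmod (of_nat (n e) + of_nat (m e) :: complex)"
    by (intro always_eventually allI) (simp flip: of_nat_add add: norm_of_nat max_def)
qed

lemma hyperlim_D:
  assumes "hyperlim rho A l" "\<And>n. n \<in> Ntil rho \<Longrightarrow> A n \<in> Ctil rho"
  shows "\<exists>M\<in>Ntil rho. \<forall>n\<in>Ntil rho. gle rho M n \<longrightarrow>
     eventually (\<lambda>e. cmod (rep rho (A n) e - rep rho l e) < rho e ^ q) (at_right 0)"
proof -
  have lC: "l \<in> Ctil rho" using assms(1) unfolding hyperlim_def by auto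
  obtain M where M: "M \<in> Ntil rho" "\<forall>n\<in>Ntil rho. gle rho M n \<longrightarrow>
        glt rho (gabs rho (gdiff rho (A n) l)) (drho_pow rho q)"
    using assms(1) unfolding hyperlim_def by blast
  show ?thesis
  proof (intro bexI[OF _ M(1)] ballI impI)
    fix n assume n: "n \<in> Ntil rho" "gle rho M n"
    have AC: "A n \<in> Ctil rho" using assms(2) n by auto
    define a0 where "a0 = rep rho (A n)"
    define l0 where "l0 = rep rho l"
    have a0: "moderate rho a0" "A n = gclass rho a0" using Ctil_rep[OF AC] a0_def by auto
    have l0: "moderate rho l0" "l = gclass rho l0" using Ctil_rep[OF lC] l0_def by auto
    have "glt rho (gabs rho (gdiff rho (A n) l)) (drho_pow rho q)" using M n by auto
    then have "glt rho (gclass rho (\<lambda>e. complex_of_real (cmod (a0 e - l0 e)))) (gclass rho (\<lambda>e. complex_of_real (rho e ^ q)))"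
      using gabs_gdiff[OF a0(1) l0(1)] a0 l0 unfolding drho_pow_def by simp
    from glt_E[OF this gclass_mem[OF mod_of_real_cmod[OF mod_diff[OF a0(1) l0(1)]]] gclass_mem[OF mod_rho_pow]]
    obtain m where "eventually (\<lambda>e. rho e ^ q - cmod (a0 e - l0 e) > rho e ^ m) (at_right 0)" by auto
    then show "eventually (\<lambda>e. cmod (rep rho (A n) e - rep rho l e) < rho e ^ q) (at_right 0)"
      using ev_pos unfolding a0_def l0_def by eventually_elim (smt (verit) zero_less_power)
  qed
qed

lemma hyperlim_unique:
  assumes "hyperlim rho A l1" "hyperlim rho A l2" "\<And>n. n \<in> Ntil rho \<Longrightarrow> A n \<in> Ctil rho"
  shows "l1 = l2"
proof -
  have lC: "l1 \<in> Ctil rho" "l2 \<in> Ctil rho" using assms(1,2) unfolding hyperlim_def by auto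
  have "negligible rho (\<lambda>e. rep rho l1 e - rep rho l2 e)"
  proof (rule neg_I[of _ 2])
    fix q
    obtain M1 where M1: "M1 \<in> Ntil rho" "\<forall>n\<in>Ntil rho. gle rho M1 n \<longrightarrow>
       eventually (\<lambda>e. cmod (rep rho (A n) e - rep rho l1 e) < rho e ^ q) (at_right 0)"
      using hyperlim_D[OF assms(1,3)] by blast
    obtain M2 where M2: "M2 \<in> Ntil rho" "\<forall>n\<in>Ntil rho. gle rho M2 n \<longrightarrow>
       eventually (\<lambda>e. cmod (rep rho (A n) e - rep rho l2 e) < rho e ^ q) (at_right 0)"
      using hyperlim_D[OF assms(2,3)] by blast
    define k where "k = (\<lambda>e. max (ni rho M1 e) (ni rho M2 e))"
    have m1: "moderate rho (\<lambda>e. of_nat (ni rho M1 e))" "M1 = gclass rho (\<lambda>e. of_nat (ni rho M1 e))"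
      using Ntil_ni[OF M1(1)] by auto
    have m2: "moderate rho (\<lambda>e. of_nat (ni rho M2 e))" "M2 = gclass rho (\<lambda>e. of_nat (ni rho M2 e))"
      using Ntil_ni[OF M2(1)] by auto
    have mk: "moderate rho (\<lambda>e. of_nat (k e))" unfolding k_def by (rule max_moderate[OF m1(1) m2(1)])
    define n where "n = gclass rho (\<lambda>e. of_nat (k e))"
    have nN: "n \<in> Ntil rho" unfolding n_def by (rule Ntil_I[OF mk])
    have g1: "gle rho M1 n" unfolding n_def by (subst m1(2), rule gle_I[OF m1(1) mk]) (auto simp: k_def)
    have g2: "gle rho M2 n" unfolding n_def by (subst m2(2), rule gle_I[OF m2(1) mk]) (auto simp: k_def)
    show "eventually (\<lambda>e. cmod (rep rho l1 e - rep rho l2 e) \<le> 2 * rho e ^ q) (at_right 0)"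
      using M1(2)[rule_format, OF nN g1] M2(2)[rule_format, OF nN g2]
    proof eventually_elim
      case (elim e)
      have "cmod (rep rho l1 e - rep rho l2 e) \<le> cmod (rep rho (A n) e - rep rho l1 e) + cmod (rep rho (A n) e - rep rho l2 e)"
        using norm_triangle_ineq4[of "rep rho (A n) e - rep rho l2 e" "rep rho (A n) e - rep rho l1 e"] by simp
      then show ?case using elim by linarith
    qed
  qed
  then have "gclass rho (rep rho l1) = gclass rho (rep rho l2)" by (rule gclass_eq)
  moreover have "l1 = gclass rho (rep rho l1)" "l2 = gclass rho (rep rho l2)" using Ctil_rep lC by auto
  ultimately show ?thesis by simp
qed

lemma hyperseries_eq:
  assumes "hyperseries_converges_to rho b l"
    "\<And>N. N \<in> Ntil rho \<Longrightarrow> hypersum rho b (gzero rho) N \<in> Ctil rho"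
  shows "hyperseries rho b = l"
  unfolding hyperseries_def
proof (rule the_equality)
  show "hyperseries_converges_to rho b l" by fact
  fix l' assume "hyperseries_converges_to rho b l'"
  then show "l' = l"
    unfolding hyperseries_converges_to_def
    by (rule hyperlim_unique[OF _ assms(1)[unfolded hyperseries_converges_to_def] assms(2)])
qed

end

lemma rad_net_conv: "rad_net a e = conv_radius (\<lambda>n. a n e)"
  unfolding rad_net_def conv_radius_def by simp

lemma powser_shift_deriv:
  fixes b :: "nat \<Rightarrow> complex"
  assumes "ereal (cmod (w - c0)) < conv_radius b"
  shows "((\<lambda>w. \<Sum>n. b n * (w - c0) ^ n) has_field_derivative (\<Sum>n. diffs b n * (w - c0) ^ n)) (at w within S)"
proof -
  have d1: "((\<lambda>w. w - c0) has_field_derivative 1) (at w within S)"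
    by (auto intro!: derivative_eq_intros)
  have d2: "((\<lambda>z. \<Sum>n. b n * z ^ n) has_field_derivative (\<Sum>n. diffs b n * (w - c0) ^ n)) (at (w - c0))"
    using has_field_derivative_powser[OF assms, of UNIV] by simp
  from DERIV_chain'[OF d1 d2] show ?thesis by simp
qed

lemma powser_shift_holo:
  fixes b :: "nat \<Rightarrow> complex"
  shows "(\<lambda>w. \<Sum>n. b n * (w - c0) ^ n) holomorphic_on eball c0 (conv_radius b)"
proof (subst holomorphic_on_open[OF open_eball], intro ballI)
  fix x assume "x \<in> eball c0 (conv_radius b)"
  then have "ereal (cmod (x - c0)) < conv_radius b"
    by (simp add: dist_norm norm_minus_commute)
  from powser_shift_deriv[OF this, of UNIV]
  show "\<exists>f'. ((\<lambda>w. \<Sum>n. b n * (w - c0) ^ n) has_field_derivative f') (at x)" by blast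
qed

lemma powser_shift_cont:
  fixes b :: "nat \<Rightarrow> complex"
  assumes "ereal r < conv_radius b"
  shows "continuous_on (cball c0 r) (\<lambda>w. \<Sum>n. b n * (w - c0) ^ n)"
  using powser_continuous_suminf[OF assms, of c0] by simp

lemma powser_deriv_cont:
  fixes b :: "nat \<Rightarrow> complex"
  shows "continuous_on (eball (0::complex) (conv_radius b)) (\<lambda>x. \<Sum>n. diffs b n * x ^ n)"
proof -
  define g where "g = (\<lambda>w. \<Sum>n. b n * (w - (0::complex)) ^ n)"
  have h: "g holomorphic_on eball 0 (conv_radius b)" unfolding g_def by (rule powser_shift_holo)
  have "deriv g holomorphic_on eball 0 (conv_radius b)" by (rule holomorphic_deriv[OF h open_eball])
  then have c: "continuous_on (eball 0 (conv_radius b)) (deriv g)" by (rule holomorphic_on_imp_continuous_on)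
  show ?thesis
  proof (rule continuous_on_cong[THEN iffD1, OF refl _ c])
    fix x :: complex assume "x \<in> eball 0 (conv_radius b)"
    then have "ereal (cmod (x - 0)) < conv_radius b" by simp
    from powser_shift_deriv[OF this, of UNIV] show "deriv g x = (\<Sum>n. diffs b n * x ^ n)"
      unfolding g_def by (simp add: DERIV_imp_deriv)
  qed
qed

lemma finite_argmax_nat: "\<exists>k\<le>n. \<forall>j\<le>n. (f::nat\<Rightarrow>real) j \<le> f k"
proof (induction n)
  case 0 then show ?case by auto
next
  case (Suc n)
  then obtain k where k: "k \<le> n" "\<forall>j\<le>n. f j \<le> f k" by blast
  show ?case
  proof (cases "f (Suc n) \<le> f k")
    case True
    then show ?thesis using k by (intro exI[of _ k]) (auto simp: le_Suc_eq)
  next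
    case False
    then show ?thesis using k by (intro exI[of _ "Suc n"]) (auto simp: le_Suc_eq)
  qed
qed

lemma abel_identity:
  fixes b w :: "nat \<Rightarrow> complex"
  shows "(\<Sum>n\<le>N. b n * w n) = (\<Sum>j\<le>N. b j) * w N - (\<Sum>n<N. (\<Sum>j\<le>n. b j) * (w (Suc n) - w n))"
proof (induction N)
  case 0 then show ?case by simp
next
  case (Suc N)
  then show ?case by (simp add: algebra_simps)
qed

lemma abel_bound:
  fixes b :: "nat \<Rightarrow> complex" and t :: complex
  assumes B: "\<And>k. k \<le> N \<Longrightarrow> cmod (\<Sum>j\<le>k. b j) \<le> B"
  shows "cmod (\<Sum>n\<le>N. b n * ((1 + t) ^ n - 1)) \<le> 2 * B * (N * (cmod t * (1 + cmod t) ^ N))"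
proof -
  define w where "w = (\<lambda>n. (1 + t) ^ n - 1)"
  have B0: "B \<ge> 0" by (rule order.trans[OF norm_ge_zero B[OF le0]])
  have dw: "cmod (w (Suc n) - w n) \<le> cmod t * (1 + cmod t) ^ N" if "n < N" for n
  proof -
    have "w (Suc n) - w n = t * (1 + t) ^ n" unfolding w_def by (simp add: algebra_simps)
    then have "cmod (w (Suc n) - w n) = cmod t * cmod (1 + t) ^ n" by (simp add: norm_mult norm_power)
    also have "\<dots> \<le> cmod t * (1 + cmod t) ^ n"
      by (intro mult_left_mono power_mono) (auto intro: order.trans[OF norm_triangle_ineq] simp del: norm_of_nat)
    also have "\<dots> \<le> cmod t * (1 + cmod t) ^ N"
      using that by (intro mult_left_mono power_increasing) auto
    finally show ?thesis .
  qed
  have wN: "cmod (w N) \<le> N * (cmod t * (1 + cmod t) ^ N)"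
  proof -
    have "(\<Sum>n<N. w (Suc n) - w n) = w N - w 0" by (rule sum_lessThan_telescope)
    then have "w N = (\<Sum>n<N. w (Suc n) - w n)" by (simp add: w_def)
    then have "cmod (w N) \<le> (\<Sum>n<N. cmod (w (Suc n) - w n))" by (simp add: sum_norm_le)
    also have "\<dots> \<le> (\<Sum>n<N. cmod t * (1 + cmod t) ^ N)" by (intro sum_mono dw) auto
    finally show ?thesis by simp
  qed
  have "cmod (\<Sum>n\<le>N. b n * w n) \<le> cmod ((\<Sum>j\<le>N. b j) * w N) + cmod (\<Sum>n<N. (\<Sum>j\<le>n. b j) * (w (Suc n) - w n))"
    unfolding abel_identity by (rule norm_triangle_ineq4)
  also have "cmod ((\<Sum>j\<le>N. b j) * w N) \<le> B * (N * (cmod t * (1 + cmod t) ^ N))"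
    unfolding norm_mult using B[of N] wN B0 by (intro mult_mono) auto
  also have "cmod (\<Sum>n<N. (\<Sum>j\<le>n. b j) * (w (Suc n) - w n)) \<le> (\<Sum>n<N. B * (cmod t * (1 + cmod t) ^ N))"
    by (rule order.trans[OF norm_sum sum_mono]) (auto simp: norm_mult intro!: mult_mono B dw B0)
  also have "\<dots> = B * (N * (cmod t * (1 + cmod t) ^ N))" by simp
  finally show ?thesis unfolding w_def by simp
qed

lemma power_diff_bound:
  fixes x y :: complex
  assumes "cmod x \<le> r" "cmod y \<le> r" "0 < r"
  shows "r * cmod (x ^ n - y ^ n) \<le> n * r ^ n * cmod (x - y)"
proof -
  have "cmod ((x / r) ^ n - (y / r) ^ n) \<le> n * cmod (x / r - y / r)"
    using assms by (intro norm_power_diff) (auto simp: norm_divide)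
  also have "(x / r) ^ n - (y / r) ^ n = (x ^ n - y ^ n) / r ^ n" by (simp add: power_divide diff_divide_distrib)
  also have "x / r - y / r = (x - y) / r" by (simp add: diff_divide_distrib)
  finally have "cmod (x ^ n - y ^ n) / r ^ n \<le> n * (cmod (x - y) / r)"
    using assms by (simp add: norm_divide norm_power)
  then show ?thesis using assms by (simp add: field_simps)
qed

lemma n_pow_le: "0 \<le> (y::real) \<Longrightarrow> y \<le> 1/2 \<Longrightarrow> real n * y ^ n \<le> 1"
proof -
  assume y: "0 \<le> y" "y \<le> 1/2"
  have "real n \<le> 2 ^ n"
  proof (induction n)
    case (Suc n)
    have "1 \<le> (2::real) ^ n" by simp
    moreover have "real (Suc n) = real n + 1" by simp
    moreover have "(2::real) ^ Suc n = 2 ^ n + 2 ^ n" by simp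
    ultimately show ?case using Suc.IH by linarith
  qed simp
  then have "real n * y ^ n \<le> 2 ^ n * (1/2) ^ n"
    using y by (intro mult_mono power_mono) auto
  also have "\<dots> = 1" by (simp add: power_mult_distrib[symmetric])
  finally show ?thesis .
qed


lemma geo_dom:
  fixes f :: "nat \<Rightarrow> complex"
  assumes "\<And>n. cmod (f n) \<le> A * (1/2) ^ n"
  shows "summable f" "cmod (suminf f) \<le> 2 * A" "cmod (\<Sum>n\<le>N. f n) \<le> 2 * A"
proof -
  have sg: "summable (\<lambda>n. A * (1/2::real) ^ n)" by (intro summable_mult summable_geometric) simp
  have sv: "(\<Sum>n. A * (1/2::real) ^ n) = 2 * A" by (simp add: suminf_mult suminf_geometric)
  have A0: "A \<ge> 0" using order.trans[OF norm_ge_zero assms[of 0]] by simp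
  show "summable f" by (rule summable_comparison_test[OF _ sg]) (use assms in auto)
  show "cmod (suminf f) \<le> 2 * A" using norm_suminf_le[OF assms sg] sv by simp
  have "cmod (\<Sum>n\<le>N. f n) \<le> (\<Sum>n\<le>N. A * (1/2) ^ n)" by (rule order.trans[OF norm_sum sum_mono]) (use assms in auto)
  also have "\<dots> \<le> (\<Sum>n. A * (1/2::real) ^ n)" by (rule sum_le_suminf[OF sg]) (use A0 in auto)
  finally show "cmod (\<Sum>n\<le>N. f n) \<le> 2 * A" using sv by simp
qed

lemma pt_pointwise:
  fixes bb :: "nat \<Rightarrow> complex" and u0 u1 :: complex and \<rho> :: real and Nn :: nat
  assumes rho: "0 < \<rho>" "\<rho> \<le> 1/4"
    and cb: "\<And>n. cmod (bb n) \<le> inverse (\<rho> ^ (n*Q+R))"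
    and Nb: "real Nn \<le> inverse (\<rho> ^ P)"
    and Bb: "\<And>j. j \<le> Nn \<Longrightarrow> cmod (\<Sum>i\<le>j. bb i * u0 ^ i) \<le> inverse (\<rho> ^ Kb)"
    and db: "cmod (u1 - u0) \<le> \<rho> ^ (Q + 1 + P + q + Kb + R + 1)"
  shows "cmod (\<Sum>n\<le>Nn. bb n * u1 ^ n - bb n * u0 ^ n) \<le> 6 * \<rho> ^ q"
proof -
  define S where "S = \<rho> ^ (Q+1)"
  define p where "p = \<rho> ^ P"
  define g where "g = \<rho> ^ q"
  define k where "k = \<rho> ^ Kb"
  define r where "r = \<rho> ^ R"
  have pos: "S > 0" "p > 0" "g > 0" "k > 0" "r > 0" using rho unfolding S_def p_def g_def k_def r_def by auto
  have le1: "S \<le> 1" "p \<le> 1" "g \<le> 1" "k \<le> 1" "r \<le> 1" unfolding S_def p_def g_def k_def r_def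
    by (rule power_le_one, use rho in auto)+
  define \<delta> where "\<delta> = u1 - u0"
  have dbd: "cmod \<delta> \<le> S * p * g * k * r * \<rho>"
    using db unfolding \<delta>_def S_def p_def g_def k_def r_def by (simp add: power_add mult_ac)
  show ?thesis
  proof (cases "cmod u0 \<ge> S")
    case True
    define t where "t = \<delta> / u0"
    have u0nz: "u0 \<noteq> 0" using True pos by auto
    have u1eq: "u1 = u0 * (1 + t)" unfolding t_def \<delta>_def using u0nz by (simp add: field_simps)
    have tb: "cmod t \<le> p * g * k * r * \<rho>"
    proof -
      have "cmod t = cmod \<delta> / cmod u0" unfolding t_def by (simp add: norm_divide)
      also have "\<dots> \<le> cmod \<delta> / S"
      proof -
        have u0p: "cmod u0 > 0" using True pos by linarith
        show ?thesis using True pos u0p by (intro divide_left_mono) (auto simp: zero_less_mult_iff)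
      qed
      also have "\<dots> \<le> (S * p * g * k * r * \<rho>) / S" using dbd pos by (intro divide_right_mono) auto
      also have "\<dots> = p * g * k * r * \<rho>" using pos by simp
      finally show ?thesis .
    qed
    have x1: "real Nn * cmod t \<le> g * k"
    proof -
      have "real Nn * cmod t \<le> inverse p * (p * g * k * r * \<rho>)"
        using Nb tb rho unfolding p_def by (intro mult_mono) auto
      also have "\<dots> = g * k * (r * \<rho>)" using pos by (simp add: field_simps)
      also have "\<dots> \<le> g * k * 1" using pos le1 rho by (intro mult_left_mono) (auto simp: mult_le_one)
      finally show ?thesis by simp
    qed
    have gk1: "g * k \<le> 1" using pos le1 by (simp add: mult_le_one)
    have ex: "(1 + cmod t) ^ Nn \<le> 3"
    proof -
      have "(1 + cmod t) ^ Nn \<le> exp (cmod t) ^ Nn" by (intro power_mono) auto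
      also have "\<dots> = exp (real Nn * cmod t)" by (simp add: exp_of_nat_mult)
      also have "\<dots> \<le> exp 1" using x1 gk1 by simp
      also have "\<dots> \<le> 3" by (rule exp_le)
      finally show ?thesis .
    qed
    have eq: "(\<Sum>n\<le>Nn. bb n * u1 ^ n - bb n * u0 ^ n) = (\<Sum>n\<le>Nn. (bb n * u0 ^ n) * ((1 + t) ^ n - 1))"
      unfolding u1eq by (intro sum.cong refl) (subst power_mult_distrib, simp add: algebra_simps)
    have "cmod (\<Sum>n\<le>Nn. (bb n * u0 ^ n) * ((1 + t) ^ n - 1)) \<le> 2 * inverse k * (real Nn * (cmod t * (1 + cmod t) ^ Nn))"
      by (rule abel_bound) (use Bb in \<open>simp add: k_def\<close>)
    also have "\<dots> \<le> 2 * inverse k * (g * k * 3)"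
    proof -
      have "real Nn * (cmod t * (1 + cmod t) ^ Nn) = (real Nn * cmod t) * (1 + cmod t) ^ Nn" by simp
      also have "\<dots> \<le> (g * k) * 3" by (rule mult_mono[OF x1 ex]) (use pos in auto)
      finally show ?thesis using pos by (intro mult_left_mono) auto
    qed
    also have "\<dots> = 6 * g" using pos by (simp add: field_simps)
    finally show ?thesis unfolding eq g_def .
  next
    case False
    define rr where "rr = 2 * S"
    have rr0: "rr > 0" unfolding rr_def using pos by simp
    have dS: "cmod \<delta> \<le> S"
    proof -
      have "S * p * g * k * r * \<rho> \<le> S * 1 * 1 * 1 * 1 * 1"
        using pos le1 rho by (intro mult_mono) auto
      then show ?thesis using dbd by simp
    qed
    have u0b: "cmod u0 \<le> rr" using False pos unfolding rr_def by simp
    have u1b: "cmod u1 \<le> rr"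
    proof -
      have "u1 = u0 + \<delta>" unfolding \<delta>_def by simp
      then have "cmod u1 \<le> cmod u0 + cmod \<delta>" using norm_triangle_ineq by metis
      then show ?thesis using False dS unfolding rr_def by simp
    qed
    define \<alpha> where "\<alpha> = inverse (\<rho> ^ Q)"
    have \<alpha>0: "\<alpha> > 0" unfolding \<alpha>_def using rho by simp
    have \<alpha>rr: "\<alpha> * rr = 2 * \<rho>" unfolding \<alpha>_def rr_def S_def using rho by (simp add: field_simps)
    have termb: "cmod (bb n * u1 ^ n - bb n * u0 ^ n) \<le> p * g" for n
    proof -
      have pd: "rr * cmod (u1 ^ n - u0 ^ n) \<le> n * rr ^ n * cmod \<delta>"
        using power_diff_bound[OF u1b u0b rr0] unfolding \<delta>_def .
      have cbn: "cmod (bb n) \<le> \<alpha> ^ n * inverse r"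
        using cb[of n] unfolding \<alpha>_def r_def by (simp add: power_add power_mult power_inverse mult.commute)
      have "cmod (bb n * u1 ^ n - bb n * u0 ^ n) = cmod (bb n) * cmod (u1 ^ n - u0 ^ n)"
        by (simp add: norm_mult[symmetric] right_diff_distrib)
      also have "\<dots> \<le> (\<alpha> ^ n * inverse r) * ((n * rr ^ n * cmod \<delta>) / rr)"
        using cbn pd rr0 \<alpha>0 pos by (intro mult_mono) (auto simp: field_simps)
      also have "\<dots> = (real n * (\<alpha> * rr) ^ n) * (cmod \<delta> / (r * rr))"
        using pos rr0 by (simp add: field_simps power_mult_distrib)
      also have "\<dots> \<le> 1 * (cmod \<delta> / (r * rr))"
        using n_pow_le[of "\<alpha> * rr" n] \<alpha>rr rho pos rr0 by (intro mult_right_mono) auto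
      also have "\<dots> \<le> (S * p * g * k * r * \<rho>) / (r * rr)"
        unfolding mult_1 using dbd pos rr0 by (intro divide_right_mono) auto
      also have "\<dots> = p * g * (k * \<rho> / 2)" unfolding rr_def using pos by (simp add: field_simps)
      also have "\<dots> \<le> p * g * 1"
      proof -
        have "k * \<rho> \<le> 1 * 1" using pos le1 rho by (intro mult_mono) auto
        then show ?thesis using pos by (intro mult_left_mono) auto
      qed
      finally show ?thesis by simp
    qed
    have "cmod (\<Sum>n\<le>Nn. bb n * u1 ^ n - bb n * u0 ^ n) \<le> (\<Sum>n\<le>Nn. p * g)"
      by (rule order.trans[OF norm_sum sum_mono]) (rule termb)
    also have "\<dots> = (real Nn + 1) * (p * g)" by simp
    also have "\<dots> \<le> (inverse p + 1) * (p * g)" using Nb pos unfolding p_def by (intro mult_right_mono) auto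
    also have "\<dots> = g + p * g" using pos by (simp add: field_simps)
    also have "\<dots> \<le> 6 * g" using pos le1 by (smt (verit) mult_left_le_one_le)
    finally show ?thesis unfolding g_def .
  qed
qed


context gsetup
begin

lemma mod_inv_pow: "moderate rho (\<lambda>e. complex_of_real (inverse (rho e ^ j)))"
  unfolding moderate_def
  by (rule exI[of _ j]) (use ev_pos in \<open>auto elim!: eventually_mono simp: norm_power norm_inverse\<close>)

lemma neg_ev_eq: "negligible rho x \<Longrightarrow> eventually (\<lambda>e. y e = x e) (at_right 0) \<Longrightarrow> negligible rho y"
  by (rule neg_le[of x y 1]) (auto elim: eventually_mono)

lemma mod_ev_eq: "moderate rho x \<Longrightarrow> eventually (\<lambda>e. y e = x e) (at_right 0) \<Longrightarrow> moderate rho y"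
  by (rule mod_le[of x y 1]) (auto elim: eventually_mono)

lemma pow_identity:
  fixes \<rho> :: real assumes "\<rho> > 0"
  shows "\<rho> ^ (n * (K + 2) + r) * inverse (\<rho> ^ K) ^ n = \<rho> ^ r * (\<rho> ^ 2) ^ n"
proof -
  have e1: "n * (K + 2) + r = r + (K * n + 2 * n)" by simp
  have "\<rho> ^ (n * (K + 2) + r) = \<rho> ^ r * (\<rho> ^ (K * n) * \<rho> ^ (2 * n))"
    unfolding e1 power_add by simp
  also have "\<rho> ^ (K * n) = (\<rho> ^ K) ^ n" by (rule power_mult)
  also have "\<rho> ^ (2 * n) = (\<rho> ^ 2) ^ n" by (rule power_mult)
  finally have "\<rho> ^ (n * (K + 2) + r) = \<rho> ^ r * ((\<rho> ^ K) ^ n * (\<rho> ^ 2) ^ n)" .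
  then show ?thesis using assms by (simp add: power_inverse field_simps)
qed

lemma coeff_bound:
  assumes se: "strongly_equiv rho a a2" and K: "eventually (\<lambda>e. cmod (u e) \<le> inverse (rho e ^ K)) (at_right 0)"
  shows "eventually (\<lambda>e. \<forall>n. cmod ((a n e - a2 n e) * u e ^ n) \<le> rho e ^ r * (1/2) ^ n) (at_right 0)"
proof -
  have "eventually (\<lambda>e. \<forall>n. cmod (a n e - a2 n e) \<le> rho e ^ (n * (K+2) + r)) (at_right 0)"
    using se[unfolded strongly_equiv_def, rule_format, of "K+2" r] .
  then show ?thesis using K ev_basic
  proof eventually_elim
    case (elim e)
    show ?case
    proof
      fix n
      have "cmod ((a n e - a2 n e) * u e ^ n) = cmod (a n e - a2 n e) * cmod (u e) ^ n"
        by (simp add: norm_mult norm_power)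
      also have "\<dots> \<le> rho e ^ (n * (K+2) + r) * inverse (rho e ^ K) ^ n"
        using elim by (intro mult_mono power_mono) auto
      also have "\<dots> = rho e ^ r * (rho e ^ 2) ^ n" using elim by (intro pow_identity) auto
      also have "\<dots> \<le> rho e ^ r * (1/2) ^ n"
      proof -
        have "rho e ^ 2 \<le> 1/2"
        proof -
          have "rho e * rho e \<le> (1/4) * 1" using elim by (intro mult_mono) auto
          then show ?thesis by (simp add: power2_eq_square)
        qed
        then show ?thesis using elim by (intro mult_left_mono power_mono) auto
      qed
      finally show "cmod ((a n e - a2 n e) * u e ^ n) \<le> rho e ^ r * (1/2) ^ n" .
    qed
  qed
qed

lemma coeff_change:
  assumes se: "strongly_equiv rho a a2" and mu: "moderate rho u"
  shows "negligible rho (\<lambda>e. \<Sum>n\<le>N e. (a n e - a2 n e) * u e ^ n)"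
    "eventually (\<lambda>e. summable (\<lambda>n. (a n e - a2 n e) * u e ^ n)) (at_right 0)"
    "negligible rho (\<lambda>e. \<Sum>n. (a n e - a2 n e) * u e ^ n)"
    "eventually (\<lambda>e. ereal (cmod (u e) + 1) \<le> conv_radius (\<lambda>n. a n e - a2 n e)) (at_right 0)"
proof -
  obtain K where K: "eventually (\<lambda>e. cmod (u e) \<le> inverse (rho e ^ K)) (at_right 0)"
    using modD[OF mu] by blast
  note cb = coeff_bound[OF se K]
  show "negligible rho (\<lambda>e. \<Sum>n\<le>N e. (a n e - a2 n e) * u e ^ n)"
  proof (rule neg_I[of _ 2])
    fix r show "eventually (\<lambda>e. cmod (\<Sum>n\<le>N e. (a n e - a2 n e) * u e ^ n) \<le> 2 * rho e ^ r) (at_right 0)"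
      using cb[of r] by eventually_elim (rule geo_dom(3), auto)
  qed
  show "eventually (\<lambda>e. summable (\<lambda>n. (a n e - a2 n e) * u e ^ n)) (at_right 0)"
    using cb[of 0] by eventually_elim (rule geo_dom(1)[where A=1], auto)
  show "negligible rho (\<lambda>e. \<Sum>n. (a n e - a2 n e) * u e ^ n)"
  proof (rule neg_I[of _ 2])
    fix r show "eventually (\<lambda>e. cmod (\<Sum>n. (a n e - a2 n e) * u e ^ n) \<le> 2 * rho e ^ r) (at_right 0)"
      using cb[of r] by eventually_elim (rule geo_dom(2), auto)
  qed
  have cb2: "eventually (\<lambda>e. \<forall>n. cmod (a n e - a2 n e) \<le> rho e ^ (n * (K+1+2) + 0)) (at_right 0)"
    using se[unfolded strongly_equiv_def, rule_format, of "K+1+2" 0] .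
  show "eventually (\<lambda>e. ereal (cmod (u e) + 1) \<le> conv_radius (\<lambda>n. a n e - a2 n e)) (at_right 0)"
    using cb2 K ev_basic
  proof eventually_elim
    case (elim e)
    define X where "X = complex_of_real (inverse (rho e ^ (K+1)))"
    have "\<forall>n. cmod ((a n e - a2 n e) * X ^ n) \<le> 1 * (1/2) ^ n"
    proof
      fix n
      have "cmod ((a n e - a2 n e) * X ^ n) = cmod (a n e - a2 n e) * inverse (rho e ^ (K+1)) ^ n"
        unfolding X_def norm_mult norm_power by (simp only: norm_of_real) (use elim in simp)
      also have "\<dots> \<le> rho e ^ (n * (K+1+2) + 0) * inverse (rho e ^ (K+1)) ^ n"
        using elim by (intro mult_mono) auto
      also have "\<dots> = rho e ^ 0 * (rho e ^ 2) ^ n" using elim by (intro pow_identity) auto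
      also have "\<dots> \<le> 1 * (1/2) ^ n"
      proof -
        have "rho e ^ 2 \<le> 1/2"
        proof -
          have "rho e * rho e \<le> (1/4) * 1" using elim by (intro mult_mono) auto
          then show ?thesis by (simp add: power2_eq_square)
        qed
        then show ?thesis using elim by (simp add: power_mono)
      qed
      finally show "cmod ((a n e - a2 n e) * X ^ n) \<le> 1 * (1/2) ^ n" .
    qed
    then have "summable (\<lambda>n. (a n e - a2 n e) * X ^ n)" by (intro geo_dom(1)[where A=1]) auto
    from conv_radius_geI[OF this] have r1: "ereal (cmod X) \<le> conv_radius (\<lambda>n. a n e - a2 n e)" .
    have "cmod (u e) + 1 \<le> inverse (rho e ^ K) + 1" using elim by simp
    also have "\<dots> \<le> inverse (rho e ^ (K+1))"
    proof -
      have i1: "inverse (rho e ^ K) \<ge> 1" using elim by (simp add: one_le_inverse power_le_one)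
      have "inverse (rho e ^ (K+1)) = inverse (rho e ^ K) * inverse (rho e)" by (simp add: mult.commute)
      moreover have "inverse (rho e) \<ge> 4" using elim by (simp add: field_simps)
      moreover have "inverse (rho e ^ K) * 4 \<le> inverse (rho e ^ K) * inverse (rho e)"
        using i1 \<open>inverse (rho e) \<ge> 4\<close> elim by (intro mult_left_mono) auto
      ultimately have "inverse (rho e ^ (K+1)) \<ge> inverse (rho e ^ K) * 4" by (simp add: mult.commute)
      then show ?thesis using i1 by linarith
    qed
    also have "\<dots> = cmod X" unfolding X_def norm_of_real using elim by simp
    finally have "cmod (u e) + 1 \<le> cmod X" .
    then have "ereal (cmod (u e) + 1) \<le> ereal (cmod X)" by simp
    with r1 show ?case by (rule order.trans[rotated])
  qed
qed

end

lemma conv_radius_uminus_eq: "conv_radius (\<lambda>n. - f n) = conv_radius (f :: nat \<Rightarrow> complex)"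
  unfolding conv_radius_def by simp

context gsetup
begin

lemma partial_transfer:
  assumes wm: "weakly_moderate rho b"
    and mh: "moderate_hypersums rho (\<lambda>n e. b n e * u0 e ^ n)"
    and nd: "negligible rho (\<lambda>e. u1 e - u0 e)"
    and NN: "N \<in> Ntil rho"
  shows "negligible rho (\<lambda>e. \<Sum>n\<le>ni rho N e. b n e * u1 e ^ n - b n e * u0 e ^ n)"
proof -
  obtain Q R where QR: "eventually (\<lambda>e. \<forall>n. cmod (b n e) \<le> inverse (rho e ^ (n*Q+R))) (at_right 0)"
    using wm unfolding weakly_moderate_def by blast
  define Nn where "Nn = ni rho N"
  have mN: "moderate rho (\<lambda>e. of_nat (Nn e))" using Ntil_ni[OF NN] Nn_def by auto
  obtain P where P: "eventually (\<lambda>e. cmod (of_nat (Nn e) :: complex) \<le> inverse (rho e ^ P)) (at_right 0)"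
    using modD[OF mN] by blast
  define B where "B = (\<lambda>j e. \<Sum>i\<le>j. b i e * u0 e ^ i)"
  have "\<forall>e. \<exists>k. k \<le> Nn e \<and> (\<forall>j\<le>Nn e. cmod (B j e) \<le> cmod (B k e))"
  proof
    fix e show "\<exists>k. k \<le> Nn e \<and> (\<forall>j\<le>Nn e. cmod (B j e) \<le> cmod (B k e))"
      using finite_argmax_nat[of "Nn e" "\<lambda>j. cmod (B j e)"] by blast
  qed
  then obtain k where k: "\<forall>e. k e \<le> Nn e \<and> (\<forall>j\<le>Nn e. cmod (B j e) \<le> cmod (B (k e) e))"
    by (auto dest: choice)
  have mk: "moderate rho (\<lambda>e. of_nat (k e))"
    by (rule mod_le[OF mN, of _ 1]) (use k in \<open>auto simp: norm_of_nat\<close>)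
  define KK where "KK = gclass rho (\<lambda>e. of_nat (k e))"
  have KN: "KK \<in> Ntil rho" unfolding KK_def by (rule Ntil_I[OF mk])
  have nk: "eventually (\<lambda>e. ni rho KK e = k e) (at_right 0)" by (rule ni_ev[OF KN]) (simp add: KK_def)
  have "moderate rho (\<lambda>e. \<Sum>n\<le>ni rho KK e. b n e * u0 e ^ n)"
    using mh KN unfolding moderate_hypersums_def by blast
  then have mB: "moderate rho (\<lambda>e. B (k e) e)"
    by (rule mod_ev_eq) (use nk in \<open>auto elim: eventually_mono simp: B_def\<close>)
  obtain K1 where K1: "eventually (\<lambda>e. cmod (B (k e) e) \<le> inverse (rho e ^ K1)) (at_right 0)"
    using modD[OF mB] by blast
  show ?thesis
  proof (rule neg_I[of _ 6])
    fix q
    show "eventually (\<lambda>e. cmod (\<Sum>n\<le>ni rho N e. b n e * u1 e ^ n - b n e * u0 e ^ n) \<le> 6 * rho e ^ q) (at_right 0)"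
      using QR P K1 negD[OF nd, of "Q + 1 + P + q + K1 + R + 1"] ev_basic
    proof eventually_elim
      case (elim e)
      have Bb: "cmod (\<Sum>i\<le>j. b i e * u0 e ^ i) \<le> inverse (rho e ^ K1)" if "j \<le> Nn e" for j
        using k that elim unfolding B_def by (meson order.trans)
      show ?case unfolding Nn_def[symmetric]
        by (rule pt_pointwise[where Q=Q and R=R and P=P and Kb=K1]) (use elim Bb in \<open>auto simp: norm_of_nat\<close>)
    qed
  qed
qed

lemma full_transfer:
  assumes se: "strongly_equiv rho a a2"
    and mu: "moderate rho u"
    and nd: "negligible rho (\<lambda>e. u e - u0 e)"
    and rad: "eventually (\<lambda>e. ereal (cmod (u0 e) + rho e ^ m) < conv_radius (\<lambda>n. a n e)) (at_right 0)"
    and dc: "\<And>x. moderate rho x \<Longrightarrow> negligible rho (\<lambda>e. x e - u0 e) \<Longrightarrow>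
               moderate rho (\<lambda>e. \<Sum>n. diffs (\<lambda>n. a2 n e) n * x e ^ n)"
  shows "negligible rho (\<lambda>e. (\<Sum>n. a n e * u e ^ n) - (\<Sum>n. a2 n e * u0 e ^ n))"
proof -
  have mu0: "moderate rho u0" using mod_diff[OF mu neg_mod[OF nd]] by simp
  have rd: "eventually (\<lambda>e. ereal (cmod (u0 e) + 1) \<le> conv_radius (\<lambda>n. a n e - a2 n e)) (at_right 0)"
    by (rule coeff_change(4)[OF se mu0])
  define good where "good = (\<lambda>e. \<forall>x\<in>closed_segment (u0 e) (u e).
      ereal (cmod x) < conv_radius (\<lambda>n. a n e) \<and> ereal (cmod x) < conv_radius (\<lambda>n. a2 n e))"
  have ev_good: "eventually good (at_right 0)"
    using rad rd negD[OF nd, of "m+1"] ev_basic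
  proof eventually_elim
    case (elim e)
    show ?case unfolding good_def
    proof
      fix x assume x: "x \<in> closed_segment (u0 e) (u e)"
      have "cmod (x - u0 e) \<le> cmod (u e - u0 e)" by (rule segment_bound1[OF x])
      moreover have "cmod x \<le> cmod (u0 e) + cmod (x - u0 e)"
        using norm_triangle_ineq[of "u0 e" "x - u0 e"] by simp
      moreover have "rho e ^ (m+1) < rho e ^ m" using elim by (intro power_strict_decreasing) auto
      moreover have "rho e ^ m \<le> 1" using elim by (intro power_le_one) auto
      ultimately have x1: "cmod x < cmod (u0 e) + rho e ^ m" "cmod x < cmod (u0 e) + 1" using elim by linarith+
      have "ereal (cmod x) < ereal (cmod (u0 e) + rho e ^ m)" using x1(1) by simp
      then have ca: "ereal (cmod x) < conv_radius (\<lambda>n. a n e)"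
        by (rule order.strict_trans[OF _ elim(1)])
      have "ereal (cmod x) < ereal (cmod (u0 e) + 1)" using x1(2) by simp
      then have cd: "ereal (cmod x) < conv_radius (\<lambda>n. - (a n e - a2 n e))"
        unfolding conv_radius_uminus_eq by (rule order.strict_trans2[OF _ elim(2)])
      have "min (conv_radius (\<lambda>n. a n e)) (conv_radius (\<lambda>n. - (a n e - a2 n e)))
            \<le> conv_radius (\<lambda>n. a n e + - (a n e - a2 n e))" by (rule conv_radius_add_ge)
      then have "min (conv_radius (\<lambda>n. a n e)) (conv_radius (\<lambda>n. - (a n e - a2 n e)))
            \<le> conv_radius (\<lambda>n. a2 n e)" by simp
      moreover have "ereal (cmod x) < min (conv_radius (\<lambda>n. a n e)) (conv_radius (\<lambda>n. - (a n e - a2 n e)))"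
        using ca cd by (simp only: min_less_iff_conj)
      ultimately have "ereal (cmod x) < conv_radius (\<lambda>n. a2 n e)" by (rule order.strict_trans2[rotated])
      then show "ereal (cmod x) < conv_radius (\<lambda>n. a n e) \<and> ereal (cmod x) < conv_radius (\<lambda>n. a2 n e)"
        using ca by simp
    qed
  qed
  define gp where "gp = (\<lambda>e x. \<Sum>n. diffs (\<lambda>n. a2 n e) n * x ^ n)"
  have "\<forall>e. \<exists>x. x \<in> closed_segment (u0 e) (u e) \<and>
      (good e \<longrightarrow> (\<forall>y\<in>closed_segment (u0 e) (u e). cmod (gp e y) \<le> cmod (gp e x)))"
  proof
    fix e
    show "\<exists>x. x \<in> closed_segment (u0 e) (u e) \<and>
      (good e \<longrightarrow> (\<forall>y\<in>closed_segment (u0 e) (u e). cmod (gp e y) \<le> cmod (gp e x)))"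
    proof (cases "good e")
      case True
      have sub: "closed_segment (u0 e) (u e) \<subseteq> eball 0 (conv_radius (\<lambda>n. a2 n e))"
        using True unfolding good_def by (auto simp: eball_def)
      have "continuous_on (closed_segment (u0 e) (u e)) (gp e)"
        unfolding gp_def by (rule continuous_on_subset[OF powser_deriv_cont sub])
      then have "continuous_on (closed_segment (u0 e) (u e)) (\<lambda>y. cmod (gp e y))"
        by (rule continuous_on_norm)
      from continuous_attains_sup[OF compact_segment _ this]
      show ?thesis by auto
    next
      case False
      then show ?thesis by (intro exI[of _ "u0 e"]) auto
    qed
  qed
  then obtain x where x: "\<forall>e. x e \<in> closed_segment (u0 e) (u e) \<and>
      (good e \<longrightarrow> (\<forall>y\<in>closed_segment (u0 e) (u e). cmod (gp e y) \<le> cmod (gp e (x e))))"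
    by (auto dest: choice)
  have nx: "negligible rho (\<lambda>e. x e - u0 e)"
  proof (rule neg_le[OF nd, of _ 1], intro always_eventually allI)
    fix e show "cmod (x e - u0 e) \<le> 1 * cmod (u e - u0 e)"
      using segment_bound1[of "x e" "u0 e" "u e"] x by simp
  qed
  have mx: "moderate rho x" using mod_add[OF mu0 neg_mod[OF nx]] by simp
  obtain K2 where K2: "eventually (\<lambda>e. cmod (gp e (x e)) \<le> inverse (rho e ^ K2)) (at_right 0)"
    using modD[OF dc[OF mx nx]] unfolding gp_def by blast
  have mvt: "eventually (\<lambda>e. cmod ((\<Sum>n. a2 n e * u e ^ n) - (\<Sum>n. a2 n e * u0 e ^ n))
      \<le> 1 * cmod (complex_of_real (inverse (rho e ^ K2)) * (u e - u0 e))) (at_right 0)"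
    using ev_good K2 ev_pos
  proof eventually_elim
    case (elim e)
    have "cmod ((\<Sum>n. a2 n e * u e ^ n) - (\<Sum>n. a2 n e * u0 e ^ n)) \<le> cmod (gp e (x e)) * cmod (u e - u0 e)"
    proof (rule field_differentiable_bound[OF convex_closed_segment])
      fix z assume z: "z \<in> closed_segment (u0 e) (u e)"
      then have "ereal (norm z) < conv_radius (\<lambda>n. a2 n e)" using elim unfolding good_def by auto
      from has_field_derivative_powser[OF this]
      show "((\<lambda>z. \<Sum>n. a2 n e * z ^ n) has_field_derivative gp e z) (at z within closed_segment (u0 e) (u e))"
        unfolding gp_def .
      show "cmod (gp e z) \<le> cmod (gp e (x e))" using x z elim by auto
    qed auto
    also have "\<dots> \<le> inverse (rho e ^ K2) * cmod (u e - u0 e)" using elim by (intro mult_right_mono) auto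
    also have "\<dots> = 1 * cmod (complex_of_real (inverse (rho e ^ K2)) * (u e - u0 e))"
      using elim unfolding norm_mult norm_of_real by simp
    finally show ?case .
  qed
  have n1: "negligible rho (\<lambda>e. (\<Sum>n. a2 n e * u e ^ n) - (\<Sum>n. a2 n e * u0 e ^ n))"
    by (rule neg_le[OF neg_mult[OF mod_inv_pow nd] mvt])
  have n2: "negligible rho (\<lambda>e. \<Sum>n. (a n e - a2 n e) * u e ^ n)" by (rule coeff_change(3)[OF se mu])
  show ?thesis
  proof (rule neg_ev_eq[OF neg_add[OF n2 n1]])
    show "eventually (\<lambda>e. (\<Sum>n. a n e * u e ^ n) - (\<Sum>n. a2 n e * u0 e ^ n) =
        (\<Sum>n. (a n e - a2 n e) * u e ^ n) + ((\<Sum>n. a2 n e * u e ^ n) - (\<Sum>n. a2 n e * u0 e ^ n))) (at_right 0)"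
      using ev_good
    proof eventually_elim
      case (elim e)
      have ue: "u e \<in> closed_segment (u0 e) (u e)" by simp
      have s1: "summable (\<lambda>n. a n e * u e ^ n)" using elim ue unfolding good_def
        by (intro summable_in_conv_radius) auto
      have s2: "summable (\<lambda>n. a2 n e * u e ^ n)" using elim ue unfolding good_def
        by (intro summable_in_conv_radius) auto
      have "(\<Sum>n. (a n e - a2 n e) * u e ^ n) = (\<Sum>n. a n e * u e ^ n - a2 n e * u e ^ n)"
        by (simp add: left_diff_distrib)
      also have "\<dots> = (\<Sum>n. a n e * u e ^ n) - (\<Sum>n. a2 n e * u e ^ n)" by (rule suminf_diff[OF s1 s2, symmetric])
      finally show ?case by simp
    qed
  qed
qed

end

context gsetup
begin

lemma conv_setD:
  assumes "\<zeta> \<in> conv_set rho a c"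
  obtains z3 m z2 c2 a2 where "\<zeta> \<in> Ctil rho" "z3 \<in> \<zeta>"
    "eventually (\<lambda>e. rad_net a e > ereal (cmod (z3 e - c e)) + ereal (rho e ^ m)) (at_right 0)"
    "z2 \<in> \<zeta>" "c2 \<in> gclass rho c" "weakly_moderate rho a2" "strongly_equiv rho a a2"
    "moderate_hypersums rho (\<lambda>n e. a2 n e * (z2 e - c2 e) ^ n)"
    "hyperseries_converges_to rho (\<lambda>n e. a2 n e * (z2 e - c2 e) ^ n)
          (gclass rho (\<lambda>e. \<Sum>n. a2 n e * (z2 e - c2 e) ^ n))"
    "\<forall>zh\<in>\<zeta>. moderate rho (\<lambda>e. \<Sum>n. of_nat (Suc n) * a2 (Suc n) e * (zh e - c2 e) ^ n)"
proof -
  have C: "\<zeta> \<in> Ctil rho" using assms unfolding conv_set_def by auto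
  have ex1: "\<exists>z'\<in>\<zeta>. \<exists>m::nat. eventually
        (\<lambda>e. rad_net a e > ereal (cmod (z' e - c e)) + ereal (rho e ^ m)) (at_right 0)"
    using assms unfolding conv_set_def by auto
  have ex2: "\<exists>z'\<in>\<zeta>. \<exists>c'\<in>gclass rho c. \<exists>a'. weakly_moderate rho a' \<and> strongly_equiv rho a a' \<and>
        moderate_hypersums rho (\<lambda>n e. a' n e * (z' e - c' e) ^ n) \<and>
        hyperseries_converges_to rho (\<lambda>n e. a' n e * (z' e - c' e) ^ n)
          (gclass rho (\<lambda>e. \<Sum>n. a' n e * (z' e - c' e) ^ n)) \<and>
        (\<forall>zh\<in>\<zeta>. moderate rho (\<lambda>e. \<Sum>n. of_nat (Suc n) * a' (Suc n) e * (zh e - c' e) ^ n))"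
    using assms unfolding conv_set_def by auto
  from ex1 obtain z3 m where 1: "z3 \<in> \<zeta>"
    "eventually (\<lambda>e. rad_net a e > ereal (cmod (z3 e - c e)) + ereal (rho e ^ m)) (at_right 0)"
    by blast
  from ex2 obtain z2 c2 a2 where 2: "z2 \<in> \<zeta>" "c2 \<in> gclass rho c" "weakly_moderate rho a2" "strongly_equiv rho a a2"
    "moderate_hypersums rho (\<lambda>n e. a2 n e * (z2 e - c2 e) ^ n)"
    "hyperseries_converges_to rho (\<lambda>n e. a2 n e * (z2 e - c2 e) ^ n)
          (gclass rho (\<lambda>e. \<Sum>n. a2 n e * (z2 e - c2 e) ^ n))"
    "\<forall>zh\<in>\<zeta>. moderate rho (\<lambda>e. \<Sum>n. of_nat (Suc n) * a2 (Suc n) e * (zh e - c2 e) ^ n)"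
    by blast
  show ?thesis by (rule that[OF C 1 2])
qed

lemma radius_shift:
  assumes "eventually (\<lambda>e. ereal (cmod (y e)) + ereal (rho e ^ m) < R e) (at_right 0)"
    "negligible rho (\<lambda>e. x e - y e)"
  shows "eventually (\<lambda>e. ereal (cmod (x e) + rho e ^ (m+1)) < R e) (at_right 0)"
  using assms(1) negD[OF assms(2), of "m+2"] ev_basic
proof eventually_elim
  case (elim e)
  have "cmod (x e) \<le> cmod (y e) + cmod (x e - y e)"
    using norm_triangle_ineq[of "y e" "x e - y e"] by simp
  moreover have "rho e ^ (m+1) + rho e ^ (m+2) < rho e ^ m" using elim rho_lemma1 by auto
  ultimately have "cmod (x e) + rho e ^ (m+1) < cmod (y e) + rho e ^ m" using elim by linarith
  then have "ereal (cmod (x e) + rho e ^ (m+1)) < ereal (cmod (y e)) + ereal (rho e ^ m)" by simp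
  then show ?case using elim(1) by (rule order.strict_trans)
qed

lemma value_transfer:
  assumes mc: "moderate rho c" and zS: "\<zeta> \<in> conv_set rho a c"
    and C: "\<zeta> \<in> Ctil rho" and z3: "z3 \<in> \<zeta>"
    and rad: "eventually (\<lambda>e. rad_net a e > ereal (cmod (z3 e - c e)) + ereal (rho e ^ m)) (at_right 0)"
    and z2: "z2 \<in> \<zeta>" and c2: "c2 \<in> gclass rho c" and se: "strongly_equiv rho a a2"
    and dc: "\<forall>zh\<in>\<zeta>. moderate rho (\<lambda>e. \<Sum>n. of_nat (Suc n) * a2 (Suc n) e * (zh e - c2 e) ^ n)"
    and w: "w \<in> \<zeta>"
  shows "negligible rho (\<lambda>e. (\<Sum>n. a n e * (w e - c e) ^ n) - (\<Sum>n. a2 n e * (z2 e - c2 e) ^ n))"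
proof -
  have mw: "moderate rho w" using Ctil_memD[OF C w] .
  have mz2: "moderate rho z2" using Ctil_memD[OF C z2] .
  have mc2: "moderate rho c2" and nc2: "negligible rho (\<lambda>e. c2 e - c e)" using gclass_memD[OF c2] by auto
  have eqz: "\<zeta> = gclass rho z2" using Ctil_mem[OF C z2] .
  have nw: "negligible rho (\<lambda>e. w e - z2 e)" using w eqz gclass_memD by auto
  have nz3: "negligible rho (\<lambda>e. z3 e - z2 e)" using z3 eqz gclass_memD by auto
  have nd: "negligible rho (\<lambda>e. (w e - c e) - (z2 e - c2 e))"
    using neg_add[OF nw nc2] by (simp add: algebra_simps)
  have nd2: "negligible rho (\<lambda>e. (z2 e - c2 e) - (z3 e - c e))"
    using neg_diff[OF neg_uminus[OF nz3] nc2] by (simp add: algebra_simps)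
  have rad': "eventually (\<lambda>e. ereal (cmod (z3 e - c e)) + ereal (rho e ^ m) < conv_radius (\<lambda>n. a n e)) (at_right 0)"
    using rad by (simp add: rad_net_conv)
  have rad2: "eventually (\<lambda>e. ereal (cmod (z2 e - c2 e) + rho e ^ (m+1)) < conv_radius (\<lambda>n. a n e)) (at_right 0)"
    by (rule radius_shift[OF rad' nd2])
  show ?thesis
  proof (rule full_transfer[OF se mod_diff[OF mw mc] nd rad2])
    fix x assume mx: "moderate rho x" and nx: "negligible rho (\<lambda>e. x e - (z2 e - c2 e))"
    define zh where "zh = (\<lambda>e. x e + c2 e)"
    have "zh \<in> gclass rho z2" unfolding gclass_def zh_def
      using mod_add[OF mx mc2] nx by (simp add: algebra_simps)
    then have "zh \<in> \<zeta>" using eqz by simp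
    then have "moderate rho (\<lambda>e. \<Sum>n. of_nat (Suc n) * a2 (Suc n) e * (zh e - c2 e) ^ n)" using dc by blast
    then show "moderate rho (\<lambda>e. \<Sum>n. diffs (\<lambda>n. a2 n e) n * x e ^ n)"
      unfolding zh_def diffs_def by simp
  qed
qed

lemma conv_set_moderate:
  assumes mc: "moderate rho c" and zS: "\<zeta> \<in> conv_set rho a c" and w: "w \<in> \<zeta>"
  shows "moderate rho (\<lambda>e. \<Sum>n. a n e * (w e - c e) ^ n)"
proof -
  obtain z3 m z2 c2 a2 where d: "\<zeta> \<in> Ctil rho" "z3 \<in> \<zeta>"
    "eventually (\<lambda>e. rad_net a e > ereal (cmod (z3 e - c e)) + ereal (rho e ^ m)) (at_right 0)"
    "z2 \<in> \<zeta>" "c2 \<in> gclass rho c" "weakly_moderate rho a2" "strongly_equiv rho a a2"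
    "moderate_hypersums rho (\<lambda>n e. a2 n e * (z2 e - c2 e) ^ n)"
    "hyperseries_converges_to rho (\<lambda>n e. a2 n e * (z2 e - c2 e) ^ n)
          (gclass rho (\<lambda>e. \<Sum>n. a2 n e * (z2 e - c2 e) ^ n))"
    "\<forall>zh\<in>\<zeta>. moderate rho (\<lambda>e. \<Sum>n. of_nat (Suc n) * a2 (Suc n) e * (zh e - c2 e) ^ n)"
    by (rule conv_setD[OF zS])
  have "gclass rho (\<lambda>e. \<Sum>n. a2 n e * (z2 e - c2 e) ^ n) \<in> Ctil rho"
    using d(9) unfolding hyperseries_converges_to_def hyperlim_def by auto
  then have m2: "moderate rho (\<lambda>e. \<Sum>n. a2 n e * (z2 e - c2 e) ^ n)" by (rule gclass_Ctil_moderate)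
  have n: "negligible rho (\<lambda>e. (\<Sum>n. a n e * (w e - c e) ^ n) - (\<Sum>n. a2 n e * (z2 e - c2 e) ^ n))"
    by (rule value_transfer[OF mc zS d(1,2,3,4,5,7,10) w])
  show ?thesis using mod_add[OF m2 neg_mod[OF n]] by simp
qed

lemma hyperlim_cong:
  assumes "\<And>n. n \<in> Ntil rho \<Longrightarrow> A n = B n"
  shows "hyperlim rho A l = hyperlim rho B l"
proof -
  have "(\<exists>M\<in>Ntil rho. \<forall>n\<in>Ntil rho. gle rho M n \<longrightarrow> glt rho (gabs rho (gdiff rho (A n) l)) (drho_pow rho q)) =
        (\<exists>M\<in>Ntil rho. \<forall>n\<in>Ntil rho. gle rho M n \<longrightarrow> glt rho (gabs rho (gdiff rho (B n) l)) (drho_pow rho q))" for q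
    by (rule bex_cong[OF refl], rule ball_cong[OF refl]) (simp add: assms)
  then show ?thesis unfolding hyperlim_def by simp
qed

end

context gsetup
begin

lemma deriv_moderate:
  assumes mc: "moderate rho c"
    and zC: "z \<in> Ctil rho" and z': "z' \<in> z"
    and ball: "sharp_ball rho z (drho_pow rho p) \<subseteq> conv_set rho a c"
    and radz: "eventually (\<lambda>e. ereal (cmod (z' e - c e) + rho e ^ m1) < conv_radius (\<lambda>n. a n e)) (at_right 0)"
    and k: "k > 0"
  shows "moderate rho (\<lambda>e. (deriv ^^ k) (\<lambda>w. \<Sum>n. a n e * (w - c e) ^ n) (z' e))"
proof -
  define p1 where "p1 = max p m1 + 1"
  define r where "r = (\<lambda>e. rho e ^ p1)"
  define V where "V = (\<lambda>e w. \<Sum>n. a n e * (w - c e) ^ n)"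
  define good where "good = (\<lambda>e. ereal (cmod (z' e - c e) + r e) < conv_radius (\<lambda>n. a n e) \<and> 0 < rho e \<and> rho e \<le> 1/4)"
  have ev_good: "eventually good (at_right 0)"
    using radz ev_basic
  proof eventually_elim
    case (elim e)
    have "r e \<le> rho e ^ m1" unfolding r_def p1_def using elim by (intro power_decreasing) auto
    then have "ereal (cmod (z' e - c e) + r e) \<le> ereal (cmod (z' e - c e) + rho e ^ m1)" by simp
    then have "ereal (cmod (z' e - c e) + r e) < conv_radius (\<lambda>n. a n e)" using elim(1) by (rule order.strict_trans1)
    then show ?case unfolding good_def using elim by simp
  qed
  have r0: "good e \<Longrightarrow> r e > 0" for e unfolding good_def r_def by simp
  have sub1: "cball (z' e) (r e) \<subseteq> cball (c e) (cmod (z' e - c e) + r e)" for e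
  proof
    fix y assume "y \<in> cball (z' e) (r e)"
    then have "dist (z' e) y \<le> r e" by simp
    moreover have "dist (c e) y \<le> dist (c e) (z' e) + dist (z' e) y" by (rule dist_triangle)
    moreover have "dist (c e) (z' e) = cmod (z' e - c e)" by (simp add: dist_norm norm_minus_commute)
    ultimately show "y \<in> cball (c e) (cmod (z' e - c e) + r e)" by simp
  qed
  have sub2: "ball (z' e) (r e) \<subseteq> eball (c e) (conv_radius (\<lambda>n. a n e))" if g: "good e" for e
  proof
    fix y assume "y \<in> ball (z' e) (r e)"
    then have "dist (z' e) y < r e" by simp
    moreover have "dist (c e) y \<le> dist (c e) (z' e) + dist (z' e) y" by (rule dist_triangle)
    moreover have "dist (c e) (z' e) = cmod (z' e - c e)" by (simp add: dist_norm norm_minus_commute)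
    ultimately have "dist (c e) y < cmod (z' e - c e) + r e" by simp
    then have "ereal (dist (c e) y) < ereal (cmod (z' e - c e) + r e)" by simp
    also have "\<dots> < conv_radius (\<lambda>n. a n e)" using g unfolding good_def by simp
    finally show "y \<in> eball (c e) (conv_radius (\<lambda>n. a n e))" by simp
  qed
  have contV: "continuous_on (cball (z' e) (r e)) (V e)" if g: "good e" for e
  proof (rule continuous_on_subset[OF _ sub1])
    show "continuous_on (cball (c e) (cmod (z' e - c e) + r e)) (V e)"
      unfolding V_def by (rule powser_shift_cont) (use g in \<open>simp add: good_def\<close>)
  qed
  have "\<forall>e. \<exists>w. good e \<longrightarrow> w \<in> cball (z' e) (r e) \<and> (\<forall>y\<in>cball (z' e) (r e). cmod (V e y) \<le> cmod (V e w))"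
  proof
    fix e
    show "\<exists>w. good e \<longrightarrow> w \<in> cball (z' e) (r e) \<and> (\<forall>y\<in>cball (z' e) (r e). cmod (V e y) \<le> cmod (V e w))"
    proof (cases "good e")
      case True
      have ne: "cball (z' e) (r e) \<noteq> {}" using r0[OF True] by auto
      from continuous_attains_sup[OF compact_cball ne continuous_on_norm[OF contV[OF True]]]
      show ?thesis by blast
    qed simp
  qed
  then obtain w where w: "\<And>e. good e \<Longrightarrow> w e \<in> cball (z' e) (r e) \<and> (\<forall>y\<in>cball (z' e) (r e). cmod (V e y) \<le> cmod (V e (w e)))"
    by (metis choice)
  have mz': "moderate rho z'" using Ctil_memD[OF zC z'] .
  have dwz: "eventually (\<lambda>e. cmod (w e - z' e) \<le> r e) (at_right 0)"
    using ev_good by eventually_elim (use w in \<open>auto simp: dist_norm norm_minus_commute\<close>)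
  have mwz: "moderate rho (\<lambda>e. w e - z' e)"
  proof (rule mod_I[of _ 1 0])
    show "eventually (\<lambda>e. cmod (w e - z' e) \<le> 1 * inverse (rho e ^ 0)) (at_right 0)"
      using dwz ev_good
    proof eventually_elim
      case (elim e)
      have "r e \<le> 1" unfolding r_def using elim unfolding good_def by (intro power_le_one) auto
      then show ?case using elim by simp
    qed
  qed
  have mw: "moderate rho w" using mod_add[OF mz' mwz] by simp
  have WC: "gclass rho w \<in> Ctil rho" by (rule Ctil_I[OF mw])
  have wW: "w \<in> gclass rho w" by (rule gclass_mem[OF mw])
  have "gclass rho w \<in> sharp_ball rho z (drho_pow rho p)"
    unfolding sharp_ball_drho_iff[OF zC z' WC wW]
  proof (rule exI[of _ "p+2"])
    show "eventually (\<lambda>e. rho e ^ p - cmod (w e - z' e) > rho e ^ (p+2)) (at_right 0)"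
      using dwz ev_basic
    proof eventually_elim
      case (elim e)
      have "r e \<le> rho e ^ (p+1)" unfolding r_def p1_def using elim by (intro power_decreasing) auto
      moreover have "rho e ^ (p+1) + rho e ^ (p+2) < rho e ^ p" using elim rho_lemma1 by auto
      ultimately show ?case using elim by linarith
    qed
  qed
  then have WS: "gclass rho w \<in> conv_set rho a c" using ball by blast
  have mV: "moderate rho (\<lambda>e. V e (w e))" unfolding V_def by (rule conv_set_moderate[OF mc WS wW])
  define bnd where "bnd = (\<lambda>e. complex_of_real (fact k * (cmod (V e (w e)) + 1) * inverse (rho e ^ (p1*k))))"
  have mbnd: "moderate rho bnd"
  proof -
    have "moderate rho (\<lambda>e. complex_of_real (fact k) * (complex_of_real (cmod (V e (w e))) + 1) * complex_of_real (inverse (rho e ^ (p1*k))))"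
      by (intro mod_mult mod_add mod_const mod_of_real_cmod mV mod_inv_pow)
    then show ?thesis unfolding bnd_def by simp
  qed
  show ?thesis
  proof (rule mod_le[OF mbnd, of _ 1])
    show "eventually (\<lambda>e. cmod ((deriv ^^ k) (\<lambda>w. \<Sum>n. a n e * (w - c e) ^ n) (z' e)) \<le> 1 * cmod (bnd e)) (at_right 0)"
      using ev_good
    proof eventually_elim
      case (elim e)
      have "cmod ((deriv ^^ k) (V e) (z' e)) \<le> fact k * (cmod (V e (w e)) + 1) / r e ^ k"
      proof (rule Cauchy_higher_deriv_bound)
        show "V e holomorphic_on ball (z' e) (r e)"
          unfolding V_def by (rule holomorphic_on_subset[OF powser_shift_holo sub2[OF elim]])
        show "continuous_on (cball (z' e) (r e)) (V e)" by (rule contV[OF elim])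
        show "0 < r e" by (rule r0[OF elim])
        show "0 < k" by (rule k)
        fix y assume "y \<in> ball (z' e) (r e)"
        then have "cmod (V e y) \<le> cmod (V e (w e))" using w[OF elim] by auto
        then show "V e y \<in> ball 0 (cmod (V e (w e)) + 1)" by simp
      qed
      also have "\<dots> = cmod (bnd e)"
      proof -
        have "r e ^ k = rho e ^ (p1 * k)" unfolding r_def by (simp add: power_mult)
        moreover have "rho e ^ (p1 * k) > 0" using elim unfolding good_def by simp
        ultimately show ?thesis unfolding bnd_def norm_of_real by (simp add: field_simps)
      qed
      finally show ?case unfolding V_def by simp
    qed
  qed
qed

end

theorem theorem3p1:
  fixes rho :: "real \<Rightarrow> real" and a :: "nat \<Rightarrow> real \<Rightarrow> complex" and c :: "real \<Rightarrow> complex"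
  assumes "gauge rho"
    and "weakly_moderate rho a"
    and "moderate rho c"
  defines "U \<equiv> (sharp_topology rho) interior_of (conv_set rho a c)"
    and "f \<equiv> (\<lambda>z. hyperseries rho (\<lambda>n e. a n e * (rep rho z e - c e) ^ n))"
    and "v \<equiv> (\<lambda>e w. \<Sum>n. a n e * (w - c e) ^ n)"
  shows "\<exists>Omega. GH_defined_by rho U f Omega v"
proof -
  interpret gsetup rho by (rule gsetup.intro) (rule assms(1))
  have mc: "moderate rho c" by (rule assms(3))
  define Omega where "Omega = (\<lambda>e. eball (c e) (conv_radius (\<lambda>n. a n e)))"
  have Usub: "U \<subseteq> conv_set rho a c" unfolding U_def by (rule interior_of_subset)
  have convC: "conv_set rho a c \<subseteq> Ctil rho" unfolding conv_set_def by auto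
  have main: "eventually (\<lambda>e. z' e \<in> Omega e) (at_right 0) \<and> f z = gclass rho (\<lambda>e. v e (z' e)) \<and>
        (\<forall>k. moderate rho (\<lambda>e. (deriv ^^ k) (v e) (z' e)))" if zU: "z \<in> U" and z': "z' \<in> z" for z z'
  proof -
    have zS: "z \<in> conv_set rho a c" using zU Usub by auto
    have zC: "z \<in> Ctil rho" using zS convC by auto
    obtain z3 m z2 c2 a2 where d: "z \<in> Ctil rho" "z3 \<in> z"
      "eventually (\<lambda>e. rad_net a e > ereal (cmod (z3 e - c e)) + ereal (rho e ^ m)) (at_right 0)"
      "z2 \<in> z" "c2 \<in> gclass rho c" "weakly_moderate rho a2" "strongly_equiv rho a a2"
      "moderate_hypersums rho (\<lambda>n e. a2 n e * (z2 e - c2 e) ^ n)"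
      "hyperseries_converges_to rho (\<lambda>n e. a2 n e * (z2 e - c2 e) ^ n)
            (gclass rho (\<lambda>e. \<Sum>n. a2 n e * (z2 e - c2 e) ^ n))"
      "\<forall>zh\<in>z. moderate rho (\<lambda>e. \<Sum>n. of_nat (Suc n) * a2 (Suc n) e * (zh e - c2 e) ^ n)"
      by (rule conv_setD[OF zS])
    have eqz: "z = gclass rho z2" using Ctil_mem[OF zC d(4)] .
    have nz3: "negligible rho (\<lambda>e. (z' e - c e) - (z3 e - c e))"
    proof -
      have "negligible rho (\<lambda>e. z' e - z2 e)" "negligible rho (\<lambda>e. z3 e - z2 e)"
        using z' d(2) eqz gclass_memD by auto
      from neg_diff[OF this] show ?thesis by simp
    qed
    have rad': "eventually (\<lambda>e. ereal (cmod (z3 e - c e)) + ereal (rho e ^ m) < conv_radius (\<lambda>n. a n e)) (at_right 0)"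
      using d(3) by (simp add: rad_net_conv)
    have radz: "eventually (\<lambda>e. ereal (cmod (z' e - c e) + rho e ^ (m+1)) < conv_radius (\<lambda>n. a n e)) (at_right 0)"
      by (rule radius_shift[OF rad' nz3])
    have G1: "eventually (\<lambda>e. z' e \<in> Omega e) (at_right 0)"
      using radz ev_pos
    proof eventually_elim
      case (elim e)
      have "ereal (cmod (z' e - c e)) \<le> ereal (cmod (z' e - c e) + rho e ^ (m+1))" using elim by simp
      then have "ereal (cmod (z' e - c e)) < conv_radius (\<lambda>n. a n e)" using elim(1) by (rule order.strict_trans1)
      then show ?case unfolding Omega_def by (simp add: dist_norm norm_minus_commute)
    qed
    define u where "u = (\<lambda>e. rep rho z e - c e)"
    define u0 where "u0 = (\<lambda>e. z2 e - c2 e)"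
    have mrz: "moderate rho (rep rho z)" using Ctil_rep[OF zC] by simp
    have mu: "moderate rho u" unfolding u_def by (rule mod_diff[OF mrz mc])
    have nd: "negligible rho (\<lambda>e. u e - u0 e)"
    proof -
      have "negligible rho (\<lambda>e. rep rho z e - z2 e)" using rep_mem[OF zC] eqz gclass_memD by auto
      moreover have "negligible rho (\<lambda>e. c2 e - c e)" using gclass_memD[OF d(5)] by auto
      ultimately show ?thesis using neg_add unfolding u_def u0_def by (fastforce simp: algebra_simps)
    qed
    have hs_eq: "hypersum rho (\<lambda>n e. a n e * (rep rho z e - c e) ^ n) (gzero rho) N =
                 hypersum rho (\<lambda>n e. a2 n e * (z2 e - c2 e) ^ n) (gzero rho) N" if NN: "N \<in> Ntil rho" for N
      unfolding hypersum_def
    proof (rule gclass_eq)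
      have n1: "negligible rho (\<lambda>e. \<Sum>n\<le>ni rho N e. (a n e - a2 n e) * u e ^ n)"
        by (rule coeff_change(1)[OF d(7) mu])
      have n2: "negligible rho (\<lambda>e. \<Sum>n\<le>ni rho N e. a2 n e * u e ^ n - a2 n e * u0 e ^ n)"
      proof -
        have mh': "moderate_hypersums rho (\<lambda>n e. a2 n e * u0 e ^ n)" using d(8) unfolding u0_def .
        show ?thesis by (rule partial_transfer[OF d(6) mh' nd NN])
      qed
      show "negligible rho (\<lambda>e. (\<Sum>n\<in>{ni rho (gzero rho) e..ni rho N e}. a n e * (rep rho z e - c e) ^ n) -
                                (\<Sum>n\<in>{ni rho (gzero rho) e..ni rho N e}. a2 n e * (z2 e - c2 e) ^ n))"
      proof (rule neg_ev_eq[OF neg_add[OF n1 n2]])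
        show "eventually (\<lambda>e. (\<Sum>n\<in>{ni rho (gzero rho) e..ni rho N e}. a n e * (rep rho z e - c e) ^ n) -
                                (\<Sum>n\<in>{ni rho (gzero rho) e..ni rho N e}. a2 n e * (z2 e - c2 e) ^ n) =
             (\<Sum>n\<le>ni rho N e. (a n e - a2 n e) * u e ^ n) + (\<Sum>n\<le>ni rho N e. a2 n e * u e ^ n - a2 n e * u0 e ^ n)) (at_right 0)"
          using gzero_ni
        proof eventually_elim
          case (elim e)
          have "(\<Sum>n\<le>ni rho N e. (a n e - a2 n e) * u e ^ n) + (\<Sum>n\<le>ni rho N e. a2 n e * u e ^ n - a2 n e * u0 e ^ n)
              = (\<Sum>n\<le>ni rho N e. a n e * u e ^ n - a2 n e * u0 e ^ n)"
            by (simp add: sum.distrib[symmetric] algebra_simps)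
          also have "\<dots> = (\<Sum>n\<le>ni rho N e. a n e * u e ^ n) - (\<Sum>n\<le>ni rho N e. a2 n e * u0 e ^ n)"
            by (rule sum_subtractf)
          finally show ?case using elim unfolding u_def u0_def by (simp add: atLeast0AtMost)
        qed
      qed
    qed
    have hs_C: "hypersum rho (\<lambda>n e. a n e * (rep rho z e - c e) ^ n) (gzero rho) N \<in> Ctil rho"
      if NN: "N \<in> Ntil rho" for N
    proof -
      have "moderate rho (\<lambda>e. \<Sum>n\<le>ni rho N e. a2 n e * (z2 e - c2 e) ^ n)"
        using d(8) NN unfolding moderate_hypersums_def by blast
      then have "moderate rho (\<lambda>e. \<Sum>n\<in>{ni rho (gzero rho) e..ni rho N e}. a2 n e * (z2 e - c2 e) ^ n)"
        by (rule mod_ev_eq) (use gzero_ni in \<open>auto elim: eventually_mono simp: atLeast0AtMost\<close>)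
      then have "hypersum rho (\<lambda>n e. a2 n e * (z2 e - c2 e) ^ n) (gzero rho) N \<in> Ctil rho"
        unfolding hypersum_def by (rule Ctil_I)
      then show ?thesis using hs_eq[OF NN] by simp
    qed
    define L2 where "L2 = gclass rho (\<lambda>e. \<Sum>n. a2 n e * (z2 e - c2 e) ^ n)"
    have conv: "hyperseries_converges_to rho (\<lambda>n e. a n e * (rep rho z e - c e) ^ n) L2"
      unfolding hyperseries_converges_to_def
      using d(9) hyperlim_cong[of "\<lambda>N. hypersum rho (\<lambda>n e. a n e * (rep rho z e - c e) ^ n) (gzero rho) N"
          "\<lambda>N. hypersum rho (\<lambda>n e. a2 n e * (z2 e - c2 e) ^ n) (gzero rho) N" L2] hs_eq
      unfolding hyperseries_converges_to_def L2_def by simp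
    have fz: "f z = L2" unfolding f_def by (rule hyperseries_eq[OF conv hs_C])
    have vt: "negligible rho (\<lambda>e. (\<Sum>n. a n e * (z' e - c e) ^ n) - (\<Sum>n. a2 n e * (z2 e - c2 e) ^ n))"
      by (rule value_transfer[OF mc zS d(1,2,3,4,5,7,10) z'])
    have "L2 = gclass rho (\<lambda>e. \<Sum>n. a n e * (z' e - c e) ^ n)"
      unfolding L2_def by (rule gclass_eq) (use neg_uminus[OF vt] in simp)
    then have G2: "f z = gclass rho (\<lambda>e. v e (z' e))" using fz unfolding v_def by simp
    have G3: "moderate rho (\<lambda>e. (deriv ^^ k) (v e) (z' e))" for k
    proof (cases "k = 0")
      case True
      then show ?thesis unfolding v_def using conv_set_moderate[OF mc zS z'] by simp
    next
      case False
      obtain p where p: "sharp_ball rho z (drho_pow rho p) \<subseteq> conv_set rho a c"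
        using interior_ball[OF zU[unfolded U_def] zC] by blast
      show ?thesis unfolding v_def
        by (rule deriv_moderate[OF mc zC z' p radz]) (use False in simp)
    qed
    show ?thesis using G1 G2 G3 by blast
  qed
  have A: "openin (sharp_topology rho) U" unfolding U_def by (rule openin_interior_of)
  have B: "U \<subseteq> Ctil rho" using Usub convC by blast
  have C: "\<forall>e\<in>{0<..1}. open (Omega e) \<and> v e holomorphic_on Omega e"
    unfolding Omega_def v_def by (auto intro: powser_shift_holo)
  have D: "\<forall>z\<in>U. \<forall>z'\<in>z. eventually (\<lambda>e. z' e \<in> Omega e) (at_right 0) \<and> f z = gclass rho (\<lambda>e. v e (z' e)) \<and>
        (\<forall>k. moderate rho (\<lambda>e. (deriv ^^ k) (v e) (z' e)))"
    using main by blast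
  show ?thesis unfolding GH_defined_by_def by (intro exI[of _ Omega] conjI A B C D)
qed


end
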